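(* Let $k$ be a field, $t\ge 1$, $d\ge 2$, and $n_1,\dots,n_t\ge 1$ integers, and put $N=\sum_{s=1}^t n_s$. Let $K^d_{n_1,\dots,n_t}$ be the $d$-complete multipartite hypergraph on the vertex set $B_1\sqcup\cdots\sqcup B_t$ with $|B_s|=n_s$. Then for every $i\ge 1$ and every $j$, $\beta_{i,j}(K^d_{n_1,\dots,n_t})$ is independent of the characteristic of $k$, and $$\beta_{i,j}(K^d_{n_1,\dots,n_t})=\begin{cases}\binom{N}{j}\binom{j-1}{d-1}-\displaystyle\sum_{\substack{(j_1,\dots,j_t)\in\mathbb N^t\\ j_1+\cdots+j_t=j}}\Big[\prod_{s=1}^t\binom{n_s}{j_s}\Big]\cdot\sum_{s=1}^t\binom{j_s-1}{d-1} & \text{if } j=i+(d-1),\\ 0 & \text{if } j\neq i+(d-1).\end{cases}$$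
   Context: A (simple) hypergraph on a finite vertex set $X$ is a collection of subsets of $X$ (edges), each of size at least $2$, none contained in another; its edge ideal $I(\mathcal H)\subseteq R=k[x_v:v\in X]$ is generated by the monomials $\prod_{v\in E}x_v$, $E$ an edge, and $\beta_{i,j}(\mathcal H)=\dim_k\mathrm{Tor}_i^R(R/I(\mathcal H),k)_j$. The $d$-complete multipartite hypergraph $K^d_{n_1,\dots,n_t}$ on $B_1\sqcup\cdots\sqcup B_t$ ($B_s$ pairwise disjoint, $|B_s|=n_s$) has as edges all $d$-element subsets of $B_1\sqcup\cdots\sqcup B_t$ except those contained in a single $B_s$. Convention: $\binom{a}{b}=0$ whenever $a<b$ (including negative $a$); $\mathbb N$ contains $0$. *)

theory Defs
  imports Complex_Main "HOL-Library.Function_Algebras"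
begin

text \<open>R = k[x_v : v in X]; monomials are exponent vectors b :: 'v => nat supported in X.
 Since I(H) is a monomial ideal, a monomial x^b lies in I(H) iff it is divisible by
 some generator prod_{v in E} x_v, E in H.\<close>

definition mono_in_edge_ideal :: "'v set set \<Rightarrow> ('v \<Rightarrow> nat) \<Rightarrow> bool" where
  "mono_in_edge_ideal H b \<longleftrightarrow> (\<exists>E\<in>H. \<forall>v\<in>E. 1 \<le> b v)"

text \<open>Tor_i^R(R/I,k) is computed by tensoring R/I with the Koszul resolution of k
 (the Koszul complex on x_v, v in X, with the sign convention coming from a linear
 order on X).  In multidegree a, the i-th chain group of (R/I) tensor K(x) has k-basis
 the elements e_F tensor x^(a - 1_F) with F subset of X, |F| = i, F contained in the support
 of a, and x^(a - 1_F) not in I.  Chains are encoded as k-valued functions on subsets F.\<close>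

definition kbasis :: "'v set \<Rightarrow> 'v set set \<Rightarrow> ('v \<Rightarrow> nat) \<Rightarrow> nat \<Rightarrow> 'v set set" where
  "kbasis X H a i = {F. F \<subseteq> X \<and> card F = i \<and> (\<forall>v\<in>F. 1 \<le> a v) \<and>
       \<not> mono_in_edge_ideal H (\<lambda>v. if v \<in> F then a v - 1 else a v)}"

definition kchains :: "'v set \<Rightarrow> 'v set set \<Rightarrow> ('v \<Rightarrow> nat) \<Rightarrow> nat \<Rightarrow> ('v set \<Rightarrow> 'k::field) set" where
  "kchains X H a i = {f. \<forall>F. f F \<noteq> 0 \<longrightarrow> F \<in> kbasis X H a i}"

text \<open>Koszul differential d_i : C_i \<rightarrow> C_(i-1),
  d(e_F tensor m) = sum_{v in F} (-1)^{#{u in F. u < v}} e_(F-v) tensor x_v m,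
 where terms whose monomial falls into I vanish; d_0 = 0.\<close>

definition kdiff :: "'v::linorder set \<Rightarrow> 'v set set \<Rightarrow> ('v \<Rightarrow> nat) \<Rightarrow> nat \<Rightarrow>
     ('v set \<Rightarrow> 'k::field) \<Rightarrow> ('v set \<Rightarrow> 'k)" where
  "kdiff X H a i f = (\<lambda>G. if i = 0 then 0 else
      if G \<in> kbasis X H a (i - 1) then
        (\<Sum>v\<in>X - G. if insert v G \<in> kbasis X H a i
            then (-1) ^ card {u\<in>G. u < v} * f (insert v G) else 0)
      else 0)"

abbreviation fscale :: "'k::field \<Rightarrow> ('v set \<Rightarrow> 'k) \<Rightarrow> ('v set \<Rightarrow> 'k)" where
  "fscale c f \<equiv> (\<lambda>x. c * f x)"

text \<open>Dimension over k of the multidegree-a part of Tor_i^R(R/I(H),k),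
 i.e. dim ker d_i - dim im d_(i+1).\<close>

definition tor_dim :: "'k::field itself \<Rightarrow> 'v::linorder set \<Rightarrow> 'v set set \<Rightarrow> nat \<Rightarrow> ('v \<Rightarrow> nat) \<Rightarrow> nat" where
  "tor_dim _ X H i a =
     vector_space.dim (fscale :: 'k \<Rightarrow> _)
        {f \<in> (kchains X H a i :: ('v set \<Rightarrow> 'k) set). kdiff X H a i f = 0}
   - vector_space.dim (fscale :: 'k \<Rightarrow> _)
        (kdiff X H a (Suc i) ` (kchains X H a (Suc i) :: ('v set \<Rightarrow> 'k) set))"

definition betti :: "'k::field itself \<Rightarrow> 'v::linorder set \<Rightarrow> 'v set set \<Rightarrow> nat \<Rightarrow> nat \<Rightarrow> nat" where
  "betti K X H i j = (\<Sum>a\<in>{a. (\<forall>v. v \<notin> X \<longrightarrow> a v = 0) \<and> (\<Sum>v\<in>X. a v) = j}. tor_dim K X H i a)"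

definition complete_multipartite_hg :: "nat \<Rightarrow> nat \<Rightarrow> (nat \<Rightarrow> 'v set) \<Rightarrow> 'v set set" where
  "complete_multipartite_hg d t B =
     {E. E \<subseteq> (\<Union>s\<in>{1..t}. B s) \<and> card E = d \<and> \<not> (\<exists>s\<in>{1..t}. E \<subseteq> B s)}"

end

theory Submission
  imports Defs
begin

context vector_space
begin

lemma lin_sum:
  assumes add: "\<And>x y. f (x + y) = f x + f y" and sc: "\<And>c x. f (c *s x) = c *s f x"
  shows "finite A \<Longrightarrow> f (\<Sum>a\<in>A. g a) = (\<Sum>a\<in>A. f (g a))"
proof (induction A rule: finite_induct)
  case empty
  have "f 0 = f ((0::'a) *s 0)" by simp
  also have "\<dots> = 0" by (simp only: sc) simp
  finally show ?case by simp
next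
  case (insert x F) then show ?case by (simp add: add)
qed

lemma dim_le_of_subset:
  assumes "V \<subseteq> W" "W \<subseteq> span T" "finite T"
  shows "dim V \<le> dim W"
proof -
  obtain B where B: "B \<subseteq> V" "independent B" "V \<subseteq> span B" "card B = dim V"
    using basis_exists by blast
  obtain B' where B': "B \<subseteq> B'" "B' \<subseteq> W" "independent B'" "W \<subseteq> span B'"
    using maximal_independent_subset_extend[of B W] B assms by blast
  have "finite B'" using independent_span_bound[OF assms(3) B'(3)] B' assms by blast
  then have "card B \<le> card B'" using B'(1) card_mono by blast
  moreover have "card B' = dim W" using basis_card_eq_dim B' by blast
  ultimately show ?thesis using B by simp
qed

lemma rank_nullity:
  assumes add: "\<And>x y. f (x + y) = f x + f y" and sc: "\<And>c x. f (c *s x) = c *s f x"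
    and W: "finite W"
  shows "dim {x\<in>span W. f x = 0} + dim (f ` span W) = dim (span W)"
proof -
  let ?V = "span W"
  let ?K = "{x\<in>?V. f x = 0}"
  have f0: "f 0 = 0" using sc[of 0 0] by simp
  obtain B0 where B0: "B0 \<subseteq> ?K" "independent B0" "?K \<subseteq> span B0" "card B0 = dim ?K"
    using basis_exists by blast
  obtain B where B: "B0 \<subseteq> B" "B \<subseteq> ?V" "independent B" "?V \<subseteq> span B"
    using maximal_independent_subset_extend[of B0 ?V] B0 by blast
  have finB: "finite B" using independent_span_bound[OF W B(3)] B by blast
  have dimV: "card B = dim ?V" using basis_card_eq_dim B by blast
  define C where "C = B - B0"
  have finC: "finite C" using finB C_def by simp
  have finB0: "finite B0" using finB B(1) finite_subset by blast
  have cardB: "card B = card B0 + card C"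
    unfolding C_def using finB B(1) by (metis card_Diff_subset finB0 le_add_diff_inverse card_mono)
  have key: "\<forall>c\<in>C. u c = 0" if u: "(\<Sum>c\<in>C. u c *s f c) = 0" for u
  proof -
    let ?y = "\<Sum>c\<in>C. u c *s c"
    have "f ?y = (\<Sum>c\<in>C. f (u c *s c))" by (rule lin_sum[OF add sc finC])
    also have "\<dots> = 0" using u by (simp add: sc)
    finally have fy: "f ?y = 0" .
    have "?y \<in> ?V" using B(2) C_def by (intro span_sum span_scale) auto
    then have "?y \<in> span B0" using fy B0(3) by blast
    then obtain w where w: "?y = (\<Sum>b\<in>B0. w b *s b)" using span_finite[OF finB0] by blast
    define z where "z b = (if b \<in> C then u b else - w b)" for b
    have "(\<Sum>b\<in>B. z b *s b) = (\<Sum>b\<in>C. z b *s b) + (\<Sum>b\<in>B0. z b *s b)"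
      using sum.union_disjoint[OF finC finB0, of "\<lambda>b. z b *s b"] C_def B(1)
      by (metis Diff_disjoint Diff_partition Int_commute Un_commute)
    also have "(\<Sum>b\<in>C. z b *s b) = ?y" by (simp add: z_def)
    also have "(\<Sum>b\<in>B0. z b *s b) = - (\<Sum>b\<in>B0. w b *s b)"
      by (simp add: z_def C_def sum_negf[symmetric] scale_minus_left)
    finally have "(\<Sum>b\<in>B. z b *s b) = 0" using w by simp
    then have "\<forall>b\<in>B. z b = 0" using B(3) dependent_finite[OF finB] by blast
    then show ?thesis using C_def z_def by auto
  qed
  have injC: "inj_on f C"
  proof (rule inj_onI, rule ccontr)
    fix x y assume xy: "x \<in> C" "y \<in> C" "f x = f y" "x \<noteq> y"
    define u where "u c = (if c = x then 1 else if c = y then -1 else (0::'a))" for c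
    have "(\<Sum>c\<in>C. u c *s f c) = (\<Sum>c\<in>{x,y}. u c *s f c)"
      using xy finC by (intro sum.mono_neutral_right) (auto simp: u_def)
    also have "\<dots> = 0" using xy by (simp add: u_def scale_minus_left)
    finally show False using key[of u] xy by (auto simp: u_def)
  qed
  have indep: "independent (f ` C)"
  proof (rule independent_if_scalars_zero)
    show "finite (f ` C)" using finC by simp
    fix g x assume g: "(\<Sum>y\<in>f ` C. g y *s y) = 0" and x: "x \<in> f ` C"
    have "(\<Sum>c\<in>C. g (f c) *s f c) = 0" using g sum.reindex[OF injC, of "\<lambda>y. g y *s y"] by simp
    then show "g x = 0" using key[of "\<lambda>c. g (f c)"] x by auto
  qed
  have img: "f ` ?V = span (f ` C)"
  proof
    show "f ` ?V \<subseteq> span (f ` C)"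
    proof
      fix y assume "y \<in> f ` ?V"
      then obtain x where x: "x \<in> ?V" "y = f x" by blast
      then obtain u where u: "x = (\<Sum>b\<in>B. u b *s b)" using B(4) span_finite[OF finB] by blast
      have "y = (\<Sum>b\<in>B. u b *s f b)" using x u lin_sum[OF add sc finB] sc by simp
      also have "\<dots> = (\<Sum>b\<in>C. u b *s f b) + (\<Sum>b\<in>B0. u b *s f b)"
        using sum.union_disjoint[OF finC finB0, of "\<lambda>b. u b *s f b"] C_def B(1)
        by (metis Diff_disjoint Diff_partition Int_commute Un_commute)
      also have "(\<Sum>b\<in>B0. u b *s f b) = 0" using B0(1) by (intro sum.neutral) auto
      finally have yy: "y = (\<Sum>b\<in>C. u b *s f b)" by simp
      show "y \<in> span (f ` C)" unfolding yy by (intro span_sum span_scale) (rule span_base, blast)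
    qed
  next
    show "span (f ` C) \<subseteq> f ` ?V"
    proof
      fix y assume "y \<in> span (f ` C)"
      then obtain w where w: "y = (\<Sum>z\<in>f ` C. w z *s z)" using span_finite[of "f ` C"] finC by auto
      also have "\<dots> = (\<Sum>c\<in>C. w (f c) *s f c)" using sum.reindex[OF injC, of "\<lambda>z. w z *s z"] by simp
      also have "\<dots> = f (\<Sum>c\<in>C. w (f c) *s c)" using lin_sum[OF add sc finC] sc by simp
      finally show "y \<in> f ` ?V" using B(2) C_def by (auto intro!: imageI span_sum span_scale)
    qed
  qed
  have "dim (f ` ?V) = card (f ` C)" using img indep dim_span_eq_card_independent by simp
  also have "\<dots> = card C" using card_image[OF injC] .
  finally show ?thesis using B0(4) cardB dimV by simp
qed

end

abbreviation gscale :: "'r::field \<Rightarrow> ('a \<Rightarrow> 'r) \<Rightarrow> ('a \<Rightarrow> 'r)" where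
  "gscale c f \<equiv> (\<lambda>x. c * f x)"

lemma vs_fun: "vector_space (gscale :: 'r::field \<Rightarrow> ('a \<Rightarrow> 'r) \<Rightarrow> ('a \<Rightarrow> 'r))"
  by unfold_locales (simp_all add: fun_eq_iff algebra_simps)

interpretation V: vector_space "gscale :: 'r::field \<Rightarrow> ('a \<Rightarrow> 'r) \<Rightarrow> ('a \<Rightarrow> 'r)"
  by (rule vs_fun)

definition dlt :: "'a \<Rightarrow> 'a \<Rightarrow> 'r::field" where
  "dlt F = (\<lambda>G. if G = F then 1 else 0)"

definition chainsP :: "'a set \<Rightarrow> ('a \<Rightarrow> 'r::field) set" where
  "chainsP P = {f. \<forall>F. f F \<noteq> 0 \<longrightarrow> F \<in> P}"

lemma dlt_inj: "inj (dlt :: 'a \<Rightarrow> 'a \<Rightarrow> 'r::field)"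
  by (rule injI) (metis dlt_def one_neq_zero)

lemma chains_span:
  assumes "finite P"
  shows "(chainsP P :: ('a \<Rightarrow> 'r::field) set) = V.span (dlt ` P)"
proof
  show "chainsP P \<subseteq> V.span (dlt ` P)"
  proof
    fix f assume f: "f \<in> chainsP P"
    have eq: "f = (\<Sum>F\<in>P. gscale (f F) (dlt F))"
    proof
      fix G
      have "(\<Sum>F\<in>P. gscale (f F) (dlt F)) G = (\<Sum>F\<in>P. f F * dlt F G)"
        by (induction P rule: infinite_finite_induct) auto
      also have "\<dots> = (\<Sum>F\<in>P. if F = G then f G else 0)"
        by (rule sum.cong) (auto simp: dlt_def)
      also have "\<dots> = f G" using f assms by (auto simp: chainsP_def)
      finally show "f G = (\<Sum>F\<in>P. gscale (f F) (dlt F)) G" by simp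
    qed
    have "(\<Sum>F\<in>P. gscale (f F) (dlt F)) \<in> V.span (dlt ` P)"
      by (intro V.span_sum V.span_scale V.span_base) auto
    then show "f \<in> V.span (dlt ` P)" using eq by simp
  qed
next
  show "V.span (dlt ` P) \<subseteq> chainsP P"
  proof (rule V.span_minimal)
    show "dlt ` P \<subseteq> chainsP P" by (auto simp: chainsP_def dlt_def split: if_splits)
    show "V.subspace (chainsP P)"
      by (auto simp: V.subspace_def chainsP_def) (metis add.left_neutral)
  qed
qed

lemma dlt_indep:
  assumes "finite P"
  shows "V.independent ((dlt :: 'a \<Rightarrow> 'a \<Rightarrow> 'r::field) ` P)"
proof (rule V.independent_if_scalars_zero)
  show "finite ((dlt :: 'a \<Rightarrow> 'a \<Rightarrow> 'r) ` P)" using assms by simp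
  fix g :: "('a \<Rightarrow> 'r) \<Rightarrow> 'r" and x :: "'a \<Rightarrow> 'r"
  assume g: "(\<Sum>y\<in>dlt ` P. gscale (g y) y) = 0" and x: "x \<in> dlt ` P"
  from x obtain F where F: "F \<in> P" "x = dlt F" by auto
  have inj: "inj_on (dlt :: 'a \<Rightarrow> 'a \<Rightarrow> 'r) P" by (rule inj_on_subset[OF dlt_inj]) simp
  have "(\<Sum>G\<in>P. gscale (g (dlt G)) (dlt G)) = (\<Sum>y\<in>dlt ` P. gscale (g y) y)"
    unfolding sum.reindex[OF inj] comp_def ..
  also have "\<dots> = 0" by (rule g)
  finally have "(\<Sum>G\<in>P. gscale (g (dlt G)) (dlt G)) = 0" .
  then have "(\<Sum>G\<in>P. gscale (g (dlt G)) (dlt G)) F = (0::'r)" by simp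
  moreover have "(\<Sum>G\<in>P. gscale (g (dlt G)) (dlt G)) F = (\<Sum>G\<in>P. g (dlt G) * dlt G F)"
    by (induction P rule: infinite_finite_induct) auto
  moreover have "\<dots> = (\<Sum>G\<in>P. if G = F then g (dlt F) else 0)"
    by (rule sum.cong) (auto simp: dlt_def)
  moreover have "\<dots> = g (dlt F)" using F assms by simp
  ultimately show "g x = 0" using F by simp
qed

lemma dim_chains:
  assumes "finite P"
  shows "V.dim (chainsP P :: ('a \<Rightarrow> 'r::field) set) = card P"
proof -
  have "V.dim (chainsP P :: ('a \<Rightarrow> 'r) set) = card ((dlt :: 'a \<Rightarrow> 'a \<Rightarrow> 'r) ` P)"
    using chains_span[OF assms, where 'r='r] V.dim_span_eq_card_independent[OF dlt_indep[OF assms, where 'r='r]] by simp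
  also have "\<dots> = card P" by (rule card_image[OF inj_on_subset[OF dlt_inj]]) simp
  finally show ?thesis .
qed

lemma rank_nullity_chains:
  fixes g :: "('a \<Rightarrow> 'r::field) \<Rightarrow> ('a \<Rightarrow> 'r)"
  assumes add: "\<And>x y. g (x + y) = g x + g y" and sc: "\<And>c x. g (gscale c x) = gscale c (g x)"
    and P: "finite P"
  shows "V.dim {x\<in>chainsP P. g x = 0} + V.dim (g ` chainsP P) = card P"
proof -
  have "V.dim {x\<in>V.span (dlt ` P). g x = 0} + V.dim (g ` V.span (dlt ` P)) = V.dim (V.span (dlt ` P) :: ('a \<Rightarrow> 'r) set)"
    by (rule V.rank_nullity[of g "dlt ` P"]) (use add sc P in auto)
  then show ?thesis using chains_span[OF P, where 'r='r] dim_chains[OF P, where 'r='r] by simp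
qed

definition sg :: "'v::linorder set \<Rightarrow> 'v \<Rightarrow> 'r::field" where
  "sg G v = (-1) ^ card {u\<in>G. u < v}"

definition bnd :: "'v::linorder set \<Rightarrow> ('v set \<Rightarrow> 'r::field) \<Rightarrow> 'v set \<Rightarrow> 'r" where
  "bnd X f G = (\<Sum>v\<in>X - G. sg G v * f (insert v G))"

definition lev :: "'a set set \<Rightarrow> nat \<Rightarrow> 'a set set" where
  "lev P i = {F\<in>P. card F = i}"

definition dd :: "'v::linorder set \<Rightarrow> 'v set set \<Rightarrow> nat \<Rightarrow> ('v set \<Rightarrow> 'r::field) \<Rightarrow> ('v set \<Rightarrow> 'r)" where
  "dd X P i f = (\<lambda>G. if i = 0 then 0 else if G \<in> lev P (i - 1) then bnd X f G else 0)"

definition kerd :: "'v::linorder set \<Rightarrow> 'v set set \<Rightarrow> nat \<Rightarrow> ('v set \<Rightarrow> 'r::field) set" where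
  "kerd X P i = {f \<in> chainsP (lev P i). dd X P i f = 0}"

definition imd :: "'v::linorder set \<Rightarrow> 'v set set \<Rightarrow> nat \<Rightarrow> ('v set \<Rightarrow> 'r::field) set" where
  "imd X P i = dd X P i ` chainsP (lev P i)"

definition convex :: "'a set set \<Rightarrow> bool" where
  "convex P \<longleftrightarrow> (\<forall>G M H. G \<in> P \<longrightarrow> H \<in> P \<longrightarrow> G \<subseteq> M \<longrightarrow> M \<subseteq> H \<longrightarrow> M \<in> P)"

lemma bnd_add: "bnd X (f + g) G = bnd X f G + bnd X g G"
  by (simp add: bnd_def algebra_simps sum.distrib)

lemma bnd_scale: "bnd X (gscale c f) G = c * bnd X f G"
  by (simp add: bnd_def algebra_simps sum_distrib_left)

lemma dd_add: "dd X P i (f + g) = dd X P i f + dd X P i g"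
  by (auto simp: dd_def bnd_add)

lemma dd_scale: "dd X P i (gscale c f) = gscale c (dd X P i f)"
  by (auto simp: dd_def bnd_scale)

lemma dd_chains: "dd X P (Suc i) f \<in> chainsP (lev P i)"
  by (auto simp: dd_def chainsP_def)

lemma sg_insert:
  assumes "finite G" "v \<notin> G"
  shows "(sg (insert v G) w :: 'r::field) = (if v < w then - sg G w else sg G w)"
proof -
  have "card {u\<in>insert v G. u < w} = (if v < w then Suc (card {u\<in>G. u < w}) else card {u\<in>G. u < w})"
  proof (cases "v < w")
    case True
    then have "{u\<in>insert v G. u < w} = insert v {u\<in>G. u < w}" by auto
    then show ?thesis using True assms by simp
  next
    case False
    then have "{u\<in>insert v G. u < w} = {u\<in>G. u < w}" by auto
    then show ?thesis using False by simp
  qed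
  then show ?thesis by (simp add: sg_def)
qed

lemma sg_sq: "(sg G v :: 'r::field) * sg G v = 1"
  by (simp add: sg_def)

lemma sum_pairs_zero:
  fixes T :: "'a \<Rightarrow> 'a \<Rightarrow> 'b::ab_group_add"
  assumes "finite A" "\<And>v w. v \<in> A \<Longrightarrow> w \<in> A \<Longrightarrow> v \<noteq> w \<Longrightarrow> T v w = - T w v"
  shows "(\<Sum>v\<in>A. \<Sum>w\<in>A - {v}. T v w) = 0"
  using assms
proof (induction A rule: finite_induct)
  case empty
  then show ?case by simp
next
  case (insert x A)
  have anti: "T v w = - T w v" if "v \<in> insert x A" "w \<in> insert x A" "v \<noteq> w" for v w
    using insert.prems that by blast
  have IH: "(\<Sum>v\<in>A. \<Sum>w\<in>A - {v}. T v w) = 0"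
    by (rule insert.IH) (rule anti; simp)
  have xA: "insert x A - {x} = A" using insert.hyps by auto
  have "(\<Sum>v\<in>insert x A. \<Sum>w\<in>insert x A - {v}. T v w)
      = (\<Sum>w\<in>insert x A - {x}. T x w) + (\<Sum>v\<in>A. \<Sum>w\<in>insert x A - {v}. T v w)"
    by (rule sum.insert[OF insert.hyps])
  also have "(\<Sum>w\<in>insert x A - {x}. T x w) = (\<Sum>w\<in>A. T x w)" by (simp only: xA)
  also have "(\<Sum>v\<in>A. \<Sum>w\<in>insert x A - {v}. T v w) = (\<Sum>v\<in>A. T v x + (\<Sum>w\<in>A - {v}. T v w))"
  proof (rule sum.cong)
    fix v assume v: "v \<in> A"
    then have e: "insert x A - {v} = insert x (A - {v})" using insert.hyps by auto
    have nx: "x \<notin> A - {v}" using insert.hyps by simp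
    show "(\<Sum>w\<in>insert x A - {v}. T v w) = T v x + (\<Sum>w\<in>A - {v}. T v w)"
      unfolding e using nx insert.hyps(1) by simp
  qed (rule refl)
  also have "\<dots> = (\<Sum>v\<in>A. T v x) + (\<Sum>v\<in>A. \<Sum>w\<in>A - {v}. T v w)" by (rule sum.distrib)
  also have "\<dots> = (\<Sum>v\<in>A. T v x)" by (simp only: IH add_0_right)
  also have "(\<Sum>w\<in>A. T x w) + (\<Sum>v\<in>A. T v x) = (\<Sum>w\<in>A. T x w + T w x)" by (rule sum.distrib[symmetric])
  also have "\<dots> = 0"
  proof (rule sum.neutral, rule ballI)
    fix w assume w: "w \<in> A"
    then have "x \<noteq> w" using insert.hyps by auto
    then have "T x w = - T w x" using w by (intro anti) auto
    then show "T x w + T w x = 0" by simp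
  qed
  finally show ?case .
qed

lemma bnd_bnd:
  assumes X: "finite X" and G: "finite G"
  shows "bnd X (bnd X f) G = (0::'r::field)"
proof -
  define A where "A = X - G"
  define T where "T v w = (sg G v * sg (insert v G) w * f (insert w (insert v G)) :: 'r)" for v w
  have "bnd X (bnd X f) G = (\<Sum>v\<in>A. sg G v * (\<Sum>w\<in>X - insert v G. sg (insert v G) w * f (insert w (insert v G))))"
    by (simp add: bnd_def A_def)
  also have "\<dots> = (\<Sum>v\<in>A. \<Sum>w\<in>A - {v}. T v w)"
  proof (rule sum.cong[OF refl])
    fix v assume "v \<in> A"
    have e: "X - insert v G = A - {v}" by (auto simp: A_def)
    show "sg G v * (\<Sum>w\<in>X - insert v G. sg (insert v G) w * f (insert w (insert v G))) = (\<Sum>w\<in>A - {v}. T v w)"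
      unfolding e T_def by (simp add: sum_distrib_left mult.assoc)
  qed
  also have "\<dots> = 0"
  proof (rule sum_pairs_zero)
    show "finite A" using X A_def by simp
    fix v w assume vw: "v \<in> A" "w \<in> A" "v \<noteq> w"
    then have vG: "v \<notin> G" "w \<notin> G" using A_def by auto
    have ins: "insert w (insert v G) = insert v (insert w G)" by auto
    have s1: "(sg (insert v G) w :: 'r) = (if v < w then - sg G w else sg G w)" by (rule sg_insert[OF G vG(1)])
    have s2: "(sg (insert w G) v :: 'r) = (if w < v then - sg G v else sg G v)" by (rule sg_insert[OF G vG(2)])
    show "T v w = - T w v"
    proof (cases "v < w")
      case True
      then have "\<not> w < v" by simp
      then show ?thesis unfolding T_def ins using True s1 s2 by simp
    next
      case False
      then have "w < v" using vw(3) by simp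
      then show ?thesis unfolding T_def ins using False s1 s2 by simp
    qed
  qed
  finally show ?thesis .
qed

lemma dd_dd:
  assumes X: "finite X" and PX: "\<forall>F\<in>P. F \<subseteq> X" and cv: "convex P"
    and f: "f \<in> chainsP (lev P (Suc k))"
  shows "dd X P k (dd X P (Suc k) f) = (0 :: 'v::linorder set \<Rightarrow> 'r::field)"
proof
  fix G
  show "dd X P k (dd X P (Suc k) f) G = 0 G"
  proof (cases "k = 0 \<or> G \<notin> lev P (k - 1)")
    case True
    then show ?thesis by (auto simp: dd_def)
  next
    case False
    then have k: "k \<noteq> 0" and GP: "G \<in> P" "card G = k - 1" by (auto simp: lev_def)
    have finG: "finite G" using GP PX X finite_subset by blast
    have "dd X P k (dd X P (Suc k) f) G = (\<Sum>v\<in>X - G. sg G v * dd X P (Suc k) f (insert v G))"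
      using False by (simp add: dd_def bnd_def)
    also have "\<dots> = (\<Sum>v\<in>X - G. sg G v * bnd X f (insert v G))"
    proof (rule sum.cong)
      fix v assume v: "v \<in> X - G"
      have cardI: "card (insert v G) = k" using v finG GP k by simp
      show "sg G v * dd X P (Suc k) f (insert v G) = sg G v * bnd X f (insert v G)"
      proof (cases "insert v G \<in> P")
        case True
        then show ?thesis using cardI by (simp add: dd_def lev_def)
      next
        case False
        have "bnd X f (insert v G) = 0"
          unfolding bnd_def
        proof (rule sum.neutral, rule ballI)
          fix w assume w: "w \<in> X - insert v G"
          have "f (insert w (insert v G)) = 0"
          proof (rule ccontr)
            assume "f (insert w (insert v G)) \<noteq> 0"
            then have "insert w (insert v G) \<in> P" using f by (auto simp: chainsP_def lev_def)
            then have "insert v G \<in> P" using cv GP unfolding convex_def by blast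
            then show False using False by simp
          qed
          then show "sg (insert v G) w * f (insert w (insert v G)) = 0" by simp
        qed
        then show ?thesis using False by (simp add: dd_def lev_def)
      qed
    qed simp
    also have "\<dots> = bnd X (bnd X f) G" by (simp add: bnd_def)
    also have "\<dots> = 0" by (rule bnd_bnd[OF X finG])
    finally show ?thesis by simp
  qed
qed

definition hm :: "'v::linorder set set \<Rightarrow> nat \<Rightarrow> ('v set \<Rightarrow> 'v) \<Rightarrow> ('v set \<Rightarrow> 'r::field) \<Rightarrow> ('v set \<Rightarrow> 'r)" where
  "hm P i c f = (\<lambda>H. if H \<in> lev P (Suc i) \<and> c H \<in> H then sg (H - {c H}) (c H) * f (H - {c H}) else 0)"

lemma exact_hom:
  fixes X :: "'v::linorder set" and c :: "'v set \<Rightarrow> 'v"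
  assumes X: "finite X" and PX: "\<forall>F\<in>P. F \<subseteq> X"
    and C: "\<And>G v. G \<in> lev P i \<Longrightarrow> v \<in> X - G \<Longrightarrow> insert v G \<in> P \<Longrightarrow> c (insert v G) = c G"
    and a: "\<And>G. G \<in> lev P i \<Longrightarrow> c G \<notin> G \<Longrightarrow> c G \<in> X \<and> insert (c G) G \<in> P"
    and b: "\<And>G. G \<in> lev P i \<Longrightarrow> c G \<in> G \<Longrightarrow>
              G - {c G} \<in> P \<and> (\<forall>v\<in>X - G. insert v (G - {c G}) \<in> P \<longrightarrow> insert v G \<in> P)"
  shows "(kerd X P i :: ('v set \<Rightarrow> 'r::field) set) \<subseteq> imd X P (Suc i)"
proof
  fix f :: "'v set \<Rightarrow> 'r" assume fk: "f \<in> kerd X P i"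
  then have fch: "f \<in> chainsP (lev P i)" and f0: "dd X P i f = 0" by (auto simp: kerd_def)
  define h where "h = hm P i c f"
  have hch: "h \<in> chainsP (lev P (Suc i))" by (auto simp: h_def hm_def chainsP_def)
  have "f = dd X P (Suc i) h"
  proof
    fix G
    show "f G = dd X P (Suc i) h G"
    proof (cases "G \<in> lev P i")
      case False
      then show ?thesis using fch by (auto simp: dd_def chainsP_def)
    next
      case True
      then have GP: "G \<in> P" "card G = i" by (auto simp: lev_def)
      have GX: "G \<subseteq> X" using PX GP by auto
      have finG: "finite G" using GX X finite_subset by blast
      have levI: "insert v G \<in> lev P (Suc i) \<longleftrightarrow> insert v G \<in> P" if "v \<in> X - G" for v
        using that finG GP by (auto simp: lev_def)
      have dG: "dd X P (Suc i) h G = (\<Sum>v\<in>X - G. sg G v * h (insert v G))"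
        using True by (simp add: dd_def bnd_def)
      show ?thesis
      proof (cases "c G \<in> G")
        case False
        define c0 where "c0 = c G"
        have c0: "c0 \<in> X - G" "insert c0 G \<in> P" using a[OF True False] c0_def False by auto
        have "(\<Sum>v\<in>X - G. sg G v * h (insert v G)) = (\<Sum>v\<in>X - G. if v = c0 then f G else 0)"
        proof (rule sum.cong[OF refl])
          fix v assume v: "v \<in> X - G"
          show "sg G v * h (insert v G) = (if v = c0 then f G else 0)"
          proof (cases "v = c0")
            case True
            have cc: "c (insert c0 G) = c0" using C[OF \<open>G \<in> lev P i\<close> c0(1) c0(2)] c0_def by simp
            have e: "insert c0 G - {c0} = G" using c0 by auto
            have "h (insert v G) = sg G c0 * f G"
              unfolding h_def hm_def using True cc e c0 levI[OF c0(1)] by simp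
            then show ?thesis using True by (simp add: mult.assoc[symmetric] sg_sq)
          next
            case False
            have "h (insert v G) = 0"
            proof (cases "insert v G \<in> P")
              case True
              then have "c (insert v G) = c0" using C[OF \<open>G \<in> lev P i\<close> v] c0_def by simp
              then have "c (insert v G) \<notin> insert v G" using False c0 by auto
              then show ?thesis by (simp add: h_def hm_def)
            next
              case False
              then show ?thesis by (simp add: h_def hm_def lev_def)
            qed
            then show ?thesis using False by simp
          qed
        qed
        also have "\<dots> = f G" using c0(1) X by simp
        finally show ?thesis using dG by simp
      next
        case True
        define c0 where "c0 = c G"
        define G' where "G' = G - {c0}"
        have c0G: "c0 \<in> G" using True c0_def by simp
        have bb: "G' \<in> P" "\<And>v. v \<in> X - G \<Longrightarrow> insert v G' \<in> P \<Longrightarrow> insert v G \<in> P"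
          using b[OF \<open>G \<in> lev P i\<close> True] c0_def G'_def by auto
        have c0X: "c0 \<in> X" using c0G GX by auto
        have GG': "G = insert c0 G'" "c0 \<notin> G'" using c0G G'_def by auto
        have finG': "finite G'" using finG G'_def by simp
        have i0: "i \<noteq> 0" using GP c0G finG card_gt_0_iff by fastforce
        have cardG': "card G' = i - 1" using GP c0G finG G'_def by simp
        have trm: "sg G v * h (insert v G) = - (sg G' c0 * (sg G' v * f (insert v G')))" if v: "v \<in> X - G" for v
        proof -
          have vc: "v \<noteq> c0" "v \<notin> G'" using v c0G G'_def by auto
          have s1: "(sg G v :: 'r) = (if c0 < v then - sg G' v else sg G' v)"
            unfolding GG'(1) by (rule sg_insert[OF finG' GG'(2)])
          have s2: "(sg (insert v G') c0 :: 'r) = (if v < c0 then - sg G' c0 else sg G' c0)"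
            by (rule sg_insert[OF finG' vc(2)])
          have hv: "h (insert v G) = sg (insert v G') c0 * f (insert v G')"
          proof (cases "insert v G \<in> P")
            case True
            have cc: "c (insert v G) = c0" using C[OF \<open>G \<in> lev P i\<close> v True] c0_def by simp
            have e: "insert v G - {c0} = insert v G'" using vc G'_def by auto
            show ?thesis unfolding h_def hm_def using True cc e c0G levI[OF v] by simp
          next
            case False
            then have "insert v G' \<notin> P" using bb(2)[OF v] by blast
            then have "f (insert v G') = 0" using fch by (auto simp: chainsP_def lev_def)
            then show ?thesis using False by (simp add: h_def hm_def lev_def)
          qed
          show ?thesis unfolding hv using s1 s2 vc(1)
            by (cases "c0 < v") (auto simp: algebra_simps)
        qed
        have "dd X P i f G' = 0" using f0 by simp
        moreover have "G' \<in> lev P (i - 1)" using bb(1) cardG' by (simp add: lev_def)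
        ultimately have "bnd X f G' = 0" using i0 by (simp add: dd_def)
        moreover have "X - G' = insert c0 (X - G)" using GG' c0X by auto
        ultimately have "sg G' c0 * f (insert c0 G') + (\<Sum>v\<in>X - G. sg G' v * f (insert v G')) = 0"
          unfolding bnd_def using X c0G by (simp add: sum.insert)
        then have sm: "(\<Sum>v\<in>X - G. sg G' v * f (insert v G')) = - (sg G' c0 * f G)"
          using GG'(1) by (simp add: eq_neg_iff_add_eq_0 add.commute)
        have "(\<Sum>v\<in>X - G. sg G v * h (insert v G)) = - (sg G' c0 * (\<Sum>v\<in>X - G. sg G' v * f (insert v G')))"
          using trm by (simp add: sum_distrib_left sum_negf)
        also have "\<dots> = f G" unfolding sm by (simp add: mult.assoc[symmetric] sg_sq)
        finally show ?thesis using dG by simp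
      qed
    qed
  qed
  then show "f \<in> imd X P (Suc i)" unfolding imd_def using hch by blast
qed

lemma finite_lev:
  assumes "finite X" "\<forall>F\<in>P. F \<subseteq> X"
  shows "finite (lev P i)"
proof -
  have "lev P i \<subseteq> Pow X" using assms by (auto simp: lev_def)
  then show ?thesis using assms(1) finite_subset by blast
qed

lemma imd_sub: "(imd X P (Suc i) :: ('v::linorder set \<Rightarrow> 'r::field) set) \<subseteq> chainsP (lev P i)"
  using dd_chains by (auto simp: imd_def)

lemma hom0:
  assumes X: "finite X" and PX: "\<forall>F\<in>P. F \<subseteq> X"
    and sub: "(kerd X P i :: ('v::linorder set \<Rightarrow> 'r::field) set) \<subseteq> imd X P (Suc i)"
  shows "V.dim (kerd X P i :: ('v set \<Rightarrow> 'r) set) - V.dim (imd X P (Suc i) :: ('v set \<Rightarrow> 'r) set) = 0"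
proof -
  have fin: "finite (lev P i)" by (rule finite_lev[OF X PX])
  have "(imd X P (Suc i) :: ('v set \<Rightarrow> 'r) set) \<subseteq> V.span (dlt ` lev P i)"
    using imd_sub chains_span[OF fin] by blast
  then have "V.dim (kerd X P i :: ('v set \<Rightarrow> 'r) set) \<le> V.dim (imd X P (Suc i) :: ('v set \<Rightarrow> 'r) set)"
    by (rule V.dim_le_of_subset[OF sub]) (use fin in simp)
  then show ?thesis by simp
qed

lemma ker_eq_im:
  assumes X: "finite X" and PX: "\<forall>F\<in>P. F \<subseteq> X" and cv: "convex P"
    and sub: "(kerd X P i :: ('v::linorder set \<Rightarrow> 'r::field) set) \<subseteq> imd X P (Suc i)"
  shows "(imd X P (Suc i) :: ('v set \<Rightarrow> 'r) set) = kerd X P i"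
proof
  show "(imd X P (Suc i) :: ('v set \<Rightarrow> 'r) set) \<subseteq> kerd X P i"
  proof
    fix g :: "'v set \<Rightarrow> 'r" assume "g \<in> imd X P (Suc i)"
    then obtain f where f: "f \<in> chainsP (lev P (Suc i))" "g = dd X P (Suc i) f" by (auto simp: imd_def)
    have "dd X P i g = 0" using dd_dd[OF X PX cv f(1)] f(2) by simp
    moreover have "g \<in> chainsP (lev P i)" using f(2) dd_chains by simp
    ultimately show "g \<in> kerd X P i" by (simp add: kerd_def)
  qed
qed (rule sub)

lemma rank_nullity_dd:
  assumes X: "finite X" and PX: "\<forall>F\<in>P. F \<subseteq> X"
  shows "V.dim (kerd X P i :: ('v::linorder set \<Rightarrow> 'r::field) set) + V.dim (imd X P i :: ('v set \<Rightarrow> 'r) set) = card (lev P i)"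
  unfolding kerd_def imd_def
  by (rule rank_nullity_chains[OF dd_add dd_scale finite_lev[OF X PX]])

lemma dim_zero_set: "V.dim ({0} :: ('a \<Rightarrow> 'r::field) set) = 0"
proof -
  have "V.span ({0} :: ('a \<Rightarrow> 'r) set) = V.span {}" by simp
  then have "V.dim ({0} :: ('a \<Rightarrow> 'r) set) = V.dim ({} :: ('a \<Rightarrow> 'r) set)" by (rule V.span_eq_dim)
  also have "\<dots> = 0" using V.dim_eq_card_independent[OF V.independent_empty] by simp
  finally show ?thesis .
qed

lemma imd0: "V.dim (imd X P 0 :: ('v::linorder set \<Rightarrow> 'r::field) set) = 0"
proof -
  have "(imd X P 0 :: ('v set \<Rightarrow> 'r) set) = {0}"
  proof -
    have "(0 :: 'v set \<Rightarrow> 'r) \<in> chainsP (lev P 0)" by (simp add: chainsP_def)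
    then show ?thesis by (auto simp: imd_def dd_def fun_eq_iff)
  qed
  then show ?thesis using dim_zero_set by simp
qed

lemma rank_alt:
  assumes X: "finite X" and PX: "\<forall>F\<in>P. F \<subseteq> X" and cv: "convex P"
    and ex: "\<And>k. k < n \<Longrightarrow> (kerd X P k :: ('v::linorder set \<Rightarrow> 'r::field) set) \<subseteq> imd X P (Suc k)"
  shows "int (V.dim (imd X P n :: ('v set \<Rightarrow> 'r) set)) = (\<Sum>k<n. (-1) ^ (n - 1 - k) * int (card (lev P k)))"
  using ex
proof (induction n)
  case 0
  then show ?case using imd0 by simp
next
  case (Suc n)
  have IH: "int (V.dim (imd X P n :: ('v set \<Rightarrow> 'r) set)) = (\<Sum>k<n. (-1) ^ (n - 1 - k) * int (card (lev P k)))"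
    using Suc by auto
  have "(imd X P (Suc n) :: ('v set \<Rightarrow> 'r) set) = kerd X P n"
    by (rule ker_eq_im[OF X PX cv Suc.prems]) simp
  then have "int (V.dim (imd X P (Suc n) :: ('v set \<Rightarrow> 'r) set)) = int (card (lev P n)) - int (V.dim (imd X P n :: ('v set \<Rightarrow> 'r) set))"
    using rank_nullity_dd[OF X PX, of n, where 'r='r] by simp
  also have "\<dots> = int (card (lev P n)) - (\<Sum>k<n. (-1) ^ (n - 1 - k) * int (card (lev P k)))" using IH by simp
  also have "(\<Sum>k<n. (-1) ^ (n - 1 - k) * int (card (lev P k))) = - (\<Sum>k<n. (-1) ^ (n - k) * int (card (lev P k)))"
  proof -
    have "(-1::int) ^ (n - 1 - k) * int (card (lev P k)) = - ((-1) ^ (n - k) * int (card (lev P k)))" if "k < n" for k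
    proof -
      have "n - k = Suc (n - 1 - k)" using that by simp
      then show ?thesis by simp
    qed
    then show ?thesis by (simp add: sum_negf[symmetric])
  qed
  also have "int (card (lev P n)) - - (\<Sum>k<n. (-1) ^ (n - k) * int (card (lev P k))) = (\<Sum>k<Suc n. (-1) ^ (Suc n - 1 - k) * int (card (lev P k)))"
    by simp
  finally show ?case .
qed

definition Qf :: "'v set \<Rightarrow> nat \<Rightarrow> (nat \<Rightarrow> 'v set) \<Rightarrow> nat set \<Rightarrow> 'v set set" where
  "Qf S d B I = {F. F \<subseteq> S \<and> (card (S - F) < d \<or> (\<exists>s\<in>I. S - F \<subseteq> B s))}"

definition disj :: "(nat \<Rightarrow> 'v set) \<Rightarrow> nat set \<Rightarrow> bool" where
  "disj B I \<longleftrightarrow> (\<forall>s\<in>I. \<forall>s'\<in>I. s \<noteq> s' \<longrightarrow> B s \<inter> B s' = {})"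

lemma blk_unique:
  assumes "disj B I" "s \<in> I" "s' \<in> I" "T \<subseteq> B s" "T \<subseteq> B s'" "T \<noteq> {}"
  shows "s = s'"
  using assms unfolding disj_def by blast

lemma blk_eq:
  assumes "disj B I" "s \<in> I" "T \<subseteq> B s" "T \<noteq> {}"
  shows "(SOME s. s \<in> I \<and> T \<subseteq> B s) = s"
  using assms blk_unique[OF assms(1)] by (intro some_equality) blast+

lemma Q_sub: "S \<subseteq> X \<Longrightarrow> \<forall>F\<in>Qf S d B I. F \<subseteq> X"
  by (auto simp: Qf_def)

lemma Q_convex:
  assumes "finite S"
  shows "convex (Qf S d B I)"
  unfolding convex_def
proof (intro allI impI)
  fix G M H assume G: "G \<in> Qf S d B I" and H: "H \<in> Qf S d B I" and GM: "G \<subseteq> M" and MH: "M \<subseteq> H"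
  have MS: "M \<subseteq> S" using H MH by (auto simp: Qf_def)
  have sub: "S - M \<subseteq> S - G" using GM by auto
  then have le: "card (S - M) \<le> card (S - G)" using assms by (simp add: card_mono)
  from G have "card (S - G) < d \<or> (\<exists>s\<in>I. S - G \<subseteq> B s)" by (simp add: Qf_def)
  then have "card (S - M) < d \<or> (\<exists>s\<in>I. S - M \<subseteq> B s)"
  proof
    assume "card (S - G) < d" then show ?thesis using le by simp
  next
    assume "\<exists>s\<in>I. S - G \<subseteq> B s" then show ?thesis using sub by blast
  qed
  then show "M \<in> Qf S d B I" using MS by (simp add: Qf_def)
qed

lemma Pow_convex: "convex (Pow S)"
  by (auto simp: convex_def)

lemma Pow_exact:
  assumes X: "finite X" and SX: "S \<subseteq> X" and S: "S \<noteq> {}"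
  shows "(kerd X (Pow S) i :: ('v::linorder set \<Rightarrow> 'r::field) set) \<subseteq> imd X (Pow S) (Suc i)"
proof -
  have fS: "finite S" using X SX finite_subset by blast
  define v0 where "v0 = Min S"
  have v0: "v0 \<in> S" using Min_in[OF fS S] v0_def by simp
  show ?thesis
    by (rule exact_hom[OF X, where c = "\<lambda>_. v0"]) (use SX v0 in \<open>auto simp: lev_def\<close>)
qed

lemma Q_exact_high:
  assumes X: "finite X" and SX: "S \<subseteq> X" and S: "S \<noteq> {}" and hi: "card S + 2 \<le> i + d" and d: "d \<ge> 2"
  shows "(kerd X (Qf S d B I) i :: ('v::linorder set \<Rightarrow> 'r::field) set) \<subseteq> imd X (Qf S d B I) (Suc i)"
proof -
  have fS: "finite S" using X SX finite_subset by blast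
  define v0 where "v0 = Min S"
  have v0: "v0 \<in> S" using Min_in[OF fS S] v0_def by simp
  have cD: "card (S - F) = card S - card F" if "F \<subseteq> S" for F
    using that fS by (simp add: card_Diff_subset finite_subset)
  have A: "v0 \<in> X \<and> insert v0 G \<in> Qf S d B I" if G: "G \<in> lev (Qf S d B I) i" and nv: "v0 \<notin> G" for G
  proof -
    have GS: "G \<subseteq> S" and cG: "card G = i" using G by (auto simp: lev_def Qf_def)
    have finG: "finite G" using GS fS finite_subset by blast
    have "card (insert v0 G) = Suc i" using finG cG nv by simp
    moreover have "insert v0 G \<subseteq> S" using GS v0 by simp
    ultimately have "card (S - insert v0 G) = card S - Suc i" using cD[of "insert v0 G"] by simp
    then have "card (S - insert v0 G) < d" using hi d by linarith
    then show ?thesis using GS v0 SX by (auto simp: Qf_def)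
  qed
  have Bc: "G - {v0} \<in> Qf S d B I \<and> (\<forall>v\<in>X - G. insert v (G - {v0}) \<in> Qf S d B I \<longrightarrow> insert v G \<in> Qf S d B I)"
    if G: "G \<in> lev (Qf S d B I) i" and v0G: "v0 \<in> G" for G
  proof -
    have GS: "G \<subseteq> S" and cG: "card G = i" using G by (auto simp: lev_def Qf_def)
    have finG: "finite G" using GS fS finite_subset by blast
    have "G \<noteq> {}" using v0G by auto
    then have "card G > 0" using finG by (simp add: card_gt_0_iff)
    then have i1: "i \<ge> 1" using cG by simp
    have "card (G - {v0}) = i - 1" using finG cG v0G by simp
    moreover have "G - {v0} \<subseteq> S" using GS by auto
    ultimately have "card (S - (G - {v0})) = card S - (i - 1)" using cD[of "G - {v0}"] by simp
    then have "card (S - (G - {v0})) < d" using hi d i1 by linarith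
    then have 1: "G - {v0} \<in> Qf S d B I" using GS by (auto simp: Qf_def)
    have 2: "insert v G \<in> Qf S d B I" if v: "v \<in> X - G" "insert v (G - {v0}) \<in> Qf S d B I" for v
    proof -
      have vS: "v \<in> S" using v by (auto simp: Qf_def)
      have "card (insert v G) = Suc i" using finG cG v by simp
      moreover have "insert v G \<subseteq> S" using GS vS by simp
      ultimately have "card (S - insert v G) = card S - Suc i" using cD[of "insert v G"] by simp
      then have "card (S - insert v G) < d" using hi d by linarith
      then show ?thesis using GS vS by (auto simp: Qf_def)
    qed
    show ?thesis using 1 2 by blast
  qed
  show ?thesis
    by (rule exact_hom[OF X Q_sub[OF SX], where c = "\<lambda>_. v0"]) (use A Bc in auto)
qed

lemma Q_exact_low:
  assumes X: "finite X" and SX: "S \<subseteq> X" and dj: "disj B I" and d: "d \<ge> 2" and lo: "i + d \<le> card S"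
  shows "(kerd X (Qf S d B I) i :: ('v::linorder set \<Rightarrow> 'r::field) set) \<subseteq> imd X (Qf S d B I) (Suc i)"
proof -
  have fS: "finite S" using X SX finite_subset by blast
  define blk where "blk G = (SOME s. s \<in> I \<and> S - G \<subseteq> B s)" for G
  define c where "c G = Min (S \<inter> B (blk G))" for G
  have cD: "card (S - F) = card S - card F" if "F \<subseteq> S" for F
    using that fS by (simp add: card_Diff_subset finite_subset)
  have info: "\<exists>s\<in>I. S - G \<subseteq> B s \<and> blk G = s \<and> c G \<in> S \<inter> B s \<and> card (S - G) \<ge> 2 \<and>
       (\<forall>v\<in>S - G. blk (insert v G) = s \<and> c (insert v G) = c G)"
    if G: "G \<in> lev (Qf S d B I) i" for G
  proof -
    from G have GS: "G \<subseteq> S" and cG: "card G = i" and GQ: "G \<in> Qf S d B I" by (auto simp: lev_def Qf_def)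
    have cT: "card (S - G) \<ge> d" using cD[OF GS] cG lo by simp
    then obtain s where s: "s \<in> I" "S - G \<subseteq> B s" using GQ by (auto simp: Qf_def)
    have Tne: "S - G \<noteq> {}" using cT d by (cases "S - G = {}") auto
    have bG: "blk G = s" unfolding blk_def by (rule blk_eq[OF dj s Tne])
    have "S - G \<subseteq> S \<inter> B s" using s by auto
    then have cin: "c G \<in> S \<inter> B s" unfolding c_def bG
      using Tne fS by (intro Min_in) auto
    have rest: "blk (insert v G) = s \<and> c (insert v G) = c G" if v: "v \<in> S - G" for v
    proof -
      have "S - insert v G = (S - G) - {v}" by auto
      moreover have "card ((S - G) - {v}) \<ge> 1" using cT d v fS by simp
      ultimately have ne: "S - insert v G \<noteq> {}" by (cases "S - G - {v} = {}") auto
      have sb: "S - insert v G \<subseteq> B s" using s by auto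
      have "blk (insert v G) = s" unfolding blk_def by (rule blk_eq[OF dj s(1) sb ne])
      then show ?thesis using bG c_def by simp
    qed
    show ?thesis using s bG cin cT d rest by auto
  qed
  show ?thesis
  proof (rule exact_hom[OF X Q_sub[OF SX], where c = c])
    fix G v assume G: "G \<in> lev (Qf S d B I) i" and v: "v \<in> X - G" and ins: "insert v G \<in> Qf S d B I"
    then have "v \<in> S" by (auto simp: Qf_def)
    then show "c (insert v G) = c G" using info[OF G] v by auto
  next
    fix G assume G: "G \<in> lev (Qf S d B I) i" and nc: "c G \<notin> G"
    obtain s where s: "s \<in> I" "S - G \<subseteq> B s" "c G \<in> S \<inter> B s" using info[OF G] by blast
    have GS: "G \<subseteq> S" using G by (auto simp: lev_def Qf_def)
    have "S - insert (c G) G \<subseteq> B s" using s by auto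
    then show "c G \<in> X \<and> insert (c G) G \<in> Qf S d B I" using s GS SX by (auto simp: Qf_def)
  next
    fix G assume G: "G \<in> lev (Qf S d B I) i" and cin: "c G \<in> G"
    obtain s where s: "s \<in> I" "S - G \<subseteq> B s" "c G \<in> S \<inter> B s" using info[OF G] by blast
    have GS: "G \<subseteq> S" using G by (auto simp: lev_def Qf_def)
    have 1: "G - {c G} \<in> Qf S d B I"
    proof -
      have "S - (G - {c G}) \<subseteq> B s" using s by auto
      then show ?thesis using GS s by (auto simp: Qf_def)
    qed
    have 2: "insert v G \<in> Qf S d B I" if v: "v \<in> X - G" "insert v (G - {c G}) \<in> Qf S d B I" for v
    proof -
      have vS: "v \<in> S" using v by (auto simp: Qf_def)
      have "S - insert v G \<subseteq> B s" using s by auto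
      then show ?thesis using GS vS s by (auto simp: Qf_def)
    qed
    show "G - {c G} \<in> Qf S d B I \<and> (\<forall>v\<in>X - G. insert v (G - {c G}) \<in> Qf S d B I \<longrightarrow> insert v G \<in> Qf S d B I)"
      using 1 2 by blast
  qed
qed

lemma card_lev_Pow:
  assumes "finite S"
  shows "card (lev (Pow S) k) = card S choose k"
proof -
  have "lev (Pow S) k = {F. F \<subseteq> S \<and> card F = k}" by (auto simp: lev_def)
  then show ?thesis using n_subsets[OF assms] by simp
qed

lemma lev_Q_high:
  assumes "finite S" "card S < k + d"
  shows "lev (Qf S d B I) k = lev (Pow S) k"
proof -
  have "card (S - F) < d" if "F \<subseteq> S" "card F = k" for F
  proof -
    have "card (S - F) = card S - k" using that assms(1) by (simp add: card_Diff_subset finite_subset)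
    moreover have "k \<le> card S" using that assms(1) card_mono by metis
    ultimately show ?thesis using assms(2) by linarith
  qed
  then show ?thesis by (auto simp: lev_def Qf_def)
qed

lemma card_lev_Q_low:
  assumes S: "finite S" and I: "finite I" and dj: "disj B I" and d: "d \<ge> 1" and lo: "k + d \<le> card S"
  shows "card (lev (Qf S d B I) k) = (\<Sum>s\<in>I. card (S \<inter> B s) choose (card S - k))"
proof -
  let ?m = "card S"
  let ?U = "\<Union>s\<in>I. {T. T \<subseteq> S \<inter> B s \<and> card T = ?m - k}"
  have cD: "card (S - F) = card S - card F" if "F \<subseteq> S" for F
    using that S by (simp add: card_Diff_subset finite_subset)
  have L: "lev (Qf S d B I) k = {F. F \<subseteq> S \<and> card F = k \<and> (\<exists>s\<in>I. S - F \<subseteq> B s)}"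
  proof -
    have "\<not> card (S - F) < d" if "F \<subseteq> S" "card F = k" for F using cD[OF that(1)] that lo by simp
    then show ?thesis by (auto simp: lev_def Qf_def)
  qed
  have bij: "bij_betw (\<lambda>F. S - F) (lev (Qf S d B I) k) ?U"
  proof (rule bij_betw_imageI)
    show "inj_on (\<lambda>F. S - F) (lev (Qf S d B I) k)"
      unfolding L
    proof (rule inj_onI)
      fix x y assume x: "x \<in> {F. F \<subseteq> S \<and> card F = k \<and> (\<exists>s\<in>I. S - F \<subseteq> B s)}"
        and y: "y \<in> {F. F \<subseteq> S \<and> card F = k \<and> (\<exists>s\<in>I. S - F \<subseteq> B s)}" and e: "S - x = S - y"
      have "x = S - (S - x)" using x by auto
      also have "\<dots> = S - (S - y)" using e by simp
      also have "\<dots> = y" using y by auto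
      finally show "x = y" .
    qed
    show "(\<lambda>F. S - F) ` lev (Qf S d B I) k = ?U"
    proof
      show "(\<lambda>F. S - F) ` lev (Qf S d B I) k \<subseteq> ?U"
      proof
        fix T assume "T \<in> (\<lambda>F. S - F) ` lev (Qf S d B I) k"
        then obtain F where F: "F \<subseteq> S" "card F = k" "\<exists>s\<in>I. S - F \<subseteq> B s" "T = S - F" unfolding L by blast
        then show "T \<in> ?U" using cD[OF F(1)] by auto
      qed
      show "?U \<subseteq> (\<lambda>F. S - F) ` lev (Qf S d B I) k"
      proof
        fix T assume "T \<in> ?U"
        then obtain s where s: "s \<in> I" "T \<subseteq> S \<inter> B s" "card T = ?m - k" by blast
        have TS: "T \<subseteq> S" using s by auto
        have "card (S - T) = k" using cD[OF TS] s lo by simp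
        moreover have "S - (S - T) = T" using TS by auto
        ultimately show "T \<in> (\<lambda>F. S - F) ` lev (Qf S d B I) k"
          unfolding L using s by (intro image_eqI[of _ _ "S - T"]) auto
      qed
    qed
  qed
  have "card (lev (Qf S d B I) k) = card ?U" using bij_betw_same_card[OF bij] .
  also have "\<dots> = (\<Sum>s\<in>I. card {T. T \<subseteq> S \<inter> B s \<and> card T = ?m - k})"
  proof (rule card_UN_disjoint[OF I])
    show "\<forall>s\<in>I. finite {T. T \<subseteq> S \<inter> B s \<and> card T = ?m - k}" using S by auto
    show "\<forall>s\<in>I. \<forall>s'\<in>I. s \<noteq> s' \<longrightarrow> {T. T \<subseteq> S \<inter> B s \<and> card T = ?m - k} \<inter> {T. T \<subseteq> S \<inter> B s' \<and> card T = ?m - k} = {}"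
    proof (intro ballI impI)
      fix s s' assume ss: "s \<in> I" "s' \<in> I" "s \<noteq> s'"
      have e: "T = {}" if "T \<subseteq> S \<inter> B s" "T \<subseteq> S \<inter> B s'" for T
      proof -
        have "B s \<inter> B s' = {}" using dj ss unfolding disj_def by blast
        then show ?thesis using that by blast
      qed
      have nz: "?m - k \<noteq> 0" using lo d by simp
      show "{T. T \<subseteq> S \<inter> B s \<and> card T = ?m - k} \<inter> {T. T \<subseteq> S \<inter> B s' \<and> card T = ?m - k} = {}"
      proof (rule equals0I)
        fix T assume "T \<in> {T. T \<subseteq> S \<inter> B s \<and> card T = ?m - k} \<inter> {T. T \<subseteq> S \<inter> B s' \<and> card T = ?m - k}"
        then have t: "T \<subseteq> S \<inter> B s" "T \<subseteq> S \<inter> B s'" "card T = ?m - k" by auto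
        have "T = {}" by (rule e[OF t(1) t(2)])
        then show False using t(3) nz by simp
      qed
    qed
  qed
  also have "\<dots> = (\<Sum>s\<in>I. card (S \<inter> B s) choose (?m - k))"
    using S by (intro sum.cong refl n_subsets) simp
  finally show ?thesis .
qed

lemma imd_cong:
  assumes "lev P i = lev P' i" "lev P (Suc i) = lev P' (Suc i)"
  shows "imd X P (Suc i) = imd X P' (Suc i)"
  unfolding imd_def dd_def using assms by simp

lemma im_sub_ker:
  assumes X: "finite X" and PX: "\<forall>F\<in>P. F \<subseteq> X" and cv: "convex P"
  shows "(imd X P (Suc i) :: ('v::linorder set \<Rightarrow> 'r::field) set) \<subseteq> kerd X P i"
proof
  fix g :: "'v set \<Rightarrow> 'r" assume "g \<in> imd X P (Suc i)"
  then obtain f where f: "f \<in> chainsP (lev P (Suc i))" "g = dd X P (Suc i) f" by (auto simp: imd_def)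
  have "dd X P i g = 0" using dd_dd[OF X PX cv f(1)] f(2) by simp
  moreover have "g \<in> chainsP (lev P i)" using f(2) dd_chains by simp
  ultimately show "g \<in> kerd X P i" by (simp add: kerd_def)
qed

lemma altA:
  fixes p m N :: nat
  assumes "p \<le> m" "N \<le> m"
  shows "(\<Sum>k<N. (-1::int) ^ (N - 1 - k) * int (p choose (m - k))) = (if p = 0 then 0 else int ((p - 1) choose (m - N)))"
  using assms(2)
proof (induction N)
  case 0
  show ?case
  proof (cases "p = 0")
    case False
    then have "p - 1 < m" using assms(1) by simp
    then show ?thesis by simp
  qed simp
next
  case (Suc N)
  have IH: "(\<Sum>k<N. (-1::int) ^ (N - 1 - k) * int (p choose (m - k))) = (if p = 0 then 0 else int ((p - 1) choose (m - N)))"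
    using Suc by simp
  have flip: "(\<Sum>k<N. (-1::int) ^ (N - k) * int (p choose (m - k))) = - (\<Sum>k<N. (-1) ^ (N - 1 - k) * int (p choose (m - k)))"
  proof -
    have "(-1::int) ^ (N - k) * int (p choose (m - k)) = - ((-1) ^ (N - 1 - k) * int (p choose (m - k)))" if "k < N" for k
    proof -
      have "N - k = Suc (N - 1 - k)" using that by simp
      then show ?thesis by simp
    qed
    then show ?thesis by (simp add: sum_negf[symmetric])
  qed
  have "(\<Sum>k<Suc N. (-1::int) ^ (Suc N - 1 - k) * int (p choose (m - k)))
      = int (p choose (m - N)) + (\<Sum>k<N. (-1::int) ^ (N - k) * int (p choose (m - k)))"
    by simp
  also have "\<dots> = int (p choose (m - N)) - (if p = 0 then 0 else int ((p - 1) choose (m - N)))"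
    using flip IH by simp
  also have "\<dots> = (if p = 0 then 0 else int ((p - 1) choose (m - Suc N)))"
  proof (cases "p = 0")
    case True
    have "m - N \<noteq> 0" using Suc.prems by simp
    then show ?thesis using True by simp
  next
    case False
    then obtain p' where p': "p = Suc p'" by (cases p) auto
    obtain j where j: "m - N = Suc j" using Suc.prems by (metis Suc_diff_Suc Suc_le_lessD)
    have "m - Suc N = j" using j by simp
    then show ?thesis using p' j by simp
  qed
  finally show ?case .
qed

lemma hom_Q:
  fixes X :: "'v::linorder set" and S :: "'v set"
  assumes X: "finite X" and SX: "S \<subseteq> X" and I: "finite I" and dj: "disj B I" and d: "d \<ge> 2" and i: "i \<ge> 1"
  shows "int (V.dim (kerd X (Qf S d B I) i :: ('v set \<Rightarrow> 'r::field) set) - V.dim (imd X (Qf S d B I) (Suc i) :: ('v set \<Rightarrow> 'r) set))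
    = (if card S = i + d - 1 then int ((card S - 1) choose (d - 1)) - (\<Sum>s\<in>I. int ((card (S \<inter> B s) - 1) choose (d - 1))) else 0)"
proof -
  let ?Q = "Qf S d B I"
  let ?m = "card S"
  have fS: "finite S" using X SX finite_subset by blast
  have PQ: "\<forall>F\<in>?Q. F \<subseteq> X" by (rule Q_sub[OF SX])
  have cvQ: "convex ?Q" by (rule Q_convex[OF fS])
  have PP: "\<forall>F\<in>Pow S. F \<subseteq> X" using SX by auto
  show ?thesis
  proof (cases "?m = i + d - 1")
    case False
    have sub: "(kerd X ?Q i :: ('v set \<Rightarrow> 'r) set) \<subseteq> imd X ?Q (Suc i)"
    proof (cases "S = {}")
      case True
      show ?thesis by (rule exact_hom[OF X PQ]) (use True i in \<open>auto simp: lev_def Qf_def\<close>)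
    next
      case Sne: False
      show ?thesis
      proof (cases "?m + 2 \<le> i + d")
        case True
        show ?thesis by (rule Q_exact_high[OF X SX Sne True d])
      next
        case hf: False
        have "i + d \<le> ?m" using hf False d by linarith
        then show ?thesis by (rule Q_exact_low[OF X SX dj d])
      qed
    qed
    have "V.dim (kerd X ?Q i :: ('v set \<Rightarrow> 'r) set) - V.dim (imd X ?Q (Suc i) :: ('v set \<Rightarrow> 'r) set) = 0"
      by (rule hom0[OF X PQ sub])
    then show ?thesis using False by simp
  next
    case True
    let ?kQ = "V.dim (kerd X ?Q i :: ('v set \<Rightarrow> 'r) set)"
    let ?rQi = "V.dim (imd X ?Q i :: ('v set \<Rightarrow> 'r) set)"
    let ?rQS = "V.dim (imd X ?Q (Suc i) :: ('v set \<Rightarrow> 'r) set)"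
    let ?rPS = "V.dim (imd X (Pow S) (Suc i) :: ('v set \<Rightarrow> 'r) set)"
    have m2: "?m \<ge> 2" using True d i by linarith
    have Sne: "S \<noteq> {}" using m2 by auto
    have ex_low: "(kerd X ?Q k :: ('v set \<Rightarrow> 'r) set) \<subseteq> imd X ?Q (Suc k)" if "k < i" for k
      by (rule Q_exact_low[OF X SX dj d]) (use that True in linarith)
    have ex_pow: "(kerd X (Pow S) k :: ('v set \<Rightarrow> 'r) set) \<subseteq> imd X (Pow S) (Suc k)" for k
      by (rule Pow_exact[OF X SX Sne])
    have RQ: "int ?rQi = (\<Sum>k<i. (-1) ^ (i - 1 - k) * int (card (lev ?Q k)))"
      by (rule rank_alt[OF X PQ cvQ ex_low])
    have RP: "int ?rPS = (\<Sum>k<Suc i. (-1) ^ (Suc i - 1 - k) * int (card (lev (Pow S) k)))"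
      by (rule rank_alt[OF X PP Pow_convex ex_pow])
    have RN: "?kQ + ?rQi = card (lev ?Q i)" by (rule rank_nullity_dd[OF X PQ])
    have levi: "lev ?Q i = lev (Pow S) i" by (rule lev_Q_high[OF fS]) (use True d in linarith)
    have levSi: "lev ?Q (Suc i) = lev (Pow S) (Suc i)" by (rule lev_Q_high[OF fS]) (use True d in linarith)
    have imdeq: "(imd X ?Q (Suc i) :: ('v set \<Rightarrow> 'r) set) = imd X (Pow S) (Suc i)"
      by (rule imd_cong[OF levi levSi])
    have le: "?rQS \<le> ?kQ"
    proof -
      have fin: "finite (lev ?Q i)" by (rule finite_lev[OF X PQ])
      have "(kerd X ?Q i :: ('v set \<Rightarrow> 'r) set) \<subseteq> V.span (dlt ` lev ?Q i)"
        using chains_span[OF fin] by (auto simp: kerd_def)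
      then show ?thesis by (rule V.dim_le_of_subset[OF im_sub_ker[OF X PQ cvQ]]) (use fin in simp)
    qed
    have cQi: "card (lev ?Q i) = ?m choose i" using levi card_lev_Pow[OF fS] by simp
    have msle: "card (S \<inter> B s) \<le> ?m" for s using fS by (simp add: card_mono)
    have "(\<Sum>k<i. (-1::int) ^ (i - 1 - k) * int (card (lev ?Q k)))
        = (\<Sum>k<i. (-1) ^ (i - 1 - k) * (\<Sum>s\<in>I. int (card (S \<inter> B s) choose (?m - k))))"
    proof (rule sum.cong[OF refl])
      fix k assume "k \<in> {..<i}"
      then have "k + d \<le> ?m" using True by simp
      then show "(-1::int) ^ (i - 1 - k) * int (card (lev ?Q k)) = (-1) ^ (i - 1 - k) * (\<Sum>s\<in>I. int (card (S \<inter> B s) choose (?m - k)))"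
        using card_lev_Q_low[OF fS I dj _ \<open>k + d \<le> ?m\<close>] d by simp
    qed
    also have "\<dots> = (\<Sum>s\<in>I. \<Sum>k<i. (-1) ^ (i - 1 - k) * int (card (S \<inter> B s) choose (?m - k)))"
      by (simp add: sum_distrib_left sum.swap[of _ "{..<i}" I])
    also have "\<dots> = (\<Sum>s\<in>I. int ((card (S \<inter> B s) - 1) choose (d - 1)))"
    proof (rule sum.cong[OF refl])
      fix s assume "s \<in> I"
      have "(\<Sum>k<i. (-1::int) ^ (i - 1 - k) * int (card (S \<inter> B s) choose (?m - k)))
          = (if card (S \<inter> B s) = 0 then 0 else int ((card (S \<inter> B s) - 1) choose (?m - i)))"
        by (rule altA[OF msle]) (use True d in linarith)
      moreover have "?m - i = d - 1" using True d by linarith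
      moreover have "(0 - 1) choose (d - 1) = 0" using d by simp
      ultimately show "(\<Sum>k<i. (-1::int) ^ (i - 1 - k) * int (card (S \<inter> B s) choose (?m - k))) = int ((card (S \<inter> B s) - 1) choose (d - 1))"
        by (cases "card (S \<inter> B s) = 0") auto
    qed
    finally have RQ': "int ?rQi = (\<Sum>s\<in>I. int ((card (S \<inter> B s) - 1) choose (d - 1)))" using RQ by simp
    have "(\<Sum>k<Suc i. (-1::int) ^ (Suc i - 1 - k) * int (card (lev (Pow S) k)))
        = (\<Sum>k<Suc i. (-1::int) ^ (Suc i - 1 - k) * int (?m choose (?m - k)))"
    proof (rule sum.cong[OF refl])
      fix k assume "k \<in> {..<Suc i}"
      then have "k \<le> ?m" using True d by simp
      then show "(-1::int) ^ (Suc i - 1 - k) * int (card (lev (Pow S) k)) = (-1) ^ (Suc i - 1 - k) * int (?m choose (?m - k))"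
        using card_lev_Pow[OF fS] binomial_symmetric[of k ?m] by simp
    qed
    also have "\<dots> = int ((?m - 1) choose (?m - Suc i))"
      using altA[of ?m ?m "Suc i"] True d m2 by simp
    also have "?m - Suc i = d - 2" using True d by linarith
    finally have RP': "int ?rPS = int ((?m - 1) choose (d - 2))" using RP by simp
    have pas: "?m choose i = ((?m - 1) choose (d - 2)) + ((?m - 1) choose (d - 1))"
    proof -
      obtain m' where m': "?m = Suc m'" using m2 by (cases "?m") auto
      have "?m choose i = ?m choose (?m - i)" using binomial_symmetric[of i ?m] True d by simp
      also have "?m - i = Suc (d - 2)" using True d by linarith
      also have "?m choose Suc (d - 2) = (m' choose (d - 2)) + (m' choose Suc (d - 2))" unfolding m' by simp
      also have "Suc (d - 2) = d - 1" using d by simp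
      also have "m' = ?m - 1" using m' by simp
      finally show ?thesis .
    qed
    have "int (?kQ - ?rQS) = int ?kQ - int ?rQS" using le by simp
    also have "int ?kQ = int (?m choose i) - int ?rQi" using RN cQi by simp
    also have "int ?rQS = int ?rPS" using imdeq by simp
    finally have "int (?kQ - ?rQS) = int (?m choose i) - int ?rQi - int ?rPS" .
    then show ?thesis using True RQ' RP' pas by simp
  qed
qed

definition fam :: "'v set \<Rightarrow> 'v set set \<Rightarrow> ('v \<Rightarrow> nat) \<Rightarrow> 'v set set" where
  "fam X H a = {F. F \<subseteq> X \<and> (\<forall>v\<in>F. 1 \<le> a v) \<and> \<not> mono_in_edge_ideal H (\<lambda>v. if v \<in> F then a v - 1 else a v)}"

lemma kbasis_lev: "kbasis X H a i = lev (fam X H a) i"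
  by (auto simp: kbasis_def lev_def fam_def)

lemma kchains_eq: "kchains X H a i = chainsP (lev (fam X H a) i)"
  by (simp add: kchains_def chainsP_def kbasis_lev)

lemma kdiff_eq:
  assumes f: "f \<in> kchains X H a i"
  shows "kdiff X H a i f = dd X (fam X H a) i f"
proof
  fix G
  show "kdiff X H a i f G = dd X (fam X H a) i f G"
  proof (cases "i = 0 \<or> G \<notin> kbasis X H a (i - 1)")
    case True
    then show ?thesis by (auto simp: kdiff_def dd_def kbasis_lev)
  next
    case False
    then have "kdiff X H a i f G = (\<Sum>v\<in>X - G. if insert v G \<in> kbasis X H a i
            then (-1) ^ card {u\<in>G. u < v} * f (insert v G) else 0)" by (simp add: kdiff_def)
    also have "\<dots> = (\<Sum>v\<in>X - G. sg G v * f (insert v G))"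
    proof (rule sum.cong[OF refl])
      fix v assume "v \<in> X - G"
      show "(if insert v G \<in> kbasis X H a i then (-1) ^ card {u\<in>G. u < v} * f (insert v G) else 0) = sg G v * f (insert v G)"
        using f by (auto simp: kchains_def sg_def)
    qed
    also have "\<dots> = dd X (fam X H a) i f G" using False by (simp add: dd_def bnd_def kbasis_lev)
    finally show ?thesis .
  qed
qed

lemma tor_eq:
  "tor_dim TYPE('r::field) X H i a = V.dim (kerd X (fam X H a) i :: ('v::linorder set \<Rightarrow> 'r) set) - V.dim (imd X (fam X H a) (Suc i) :: ('v set \<Rightarrow> 'r) set)"
proof -
  have 1: "{f \<in> (kchains X H a i :: ('v set \<Rightarrow> 'r) set). kdiff X H a i f = 0} = kerd X (fam X H a) i"
  proof -
    have e: "kdiff X H a i f = dd X (fam X H a) i f" if "f \<in> chainsP (lev (fam X H a) i)" for f :: "'v set \<Rightarrow> 'r"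
      using kdiff_eq[of f X H a i] that by (simp add: kchains_eq)
    show ?thesis by (auto simp: kerd_def kchains_eq e)
  qed
  have 2: "(kdiff X H a (Suc i) ` (kchains X H a (Suc i) :: ('v set \<Rightarrow> 'r) set)) = imd X (fam X H a) (Suc i)"
    unfolding imd_def kchains_eq[symmetric] by (rule image_cong[OF refl kdiff_eq])
  show ?thesis unfolding tor_dim_def 1 2 ..
qed

lemma mono_cong:
  assumes "\<And>v. (1 \<le> b v) = (1 \<le> b' v)"
  shows "mono_in_edge_ideal H b = mono_in_edge_ideal H b'"
  using assms by (simp add: mono_in_edge_ideal_def)

lemma fam_v0:
  assumes a: "a z \<ge> 2" and z: "z \<in> X"
  shows "F \<in> fam X H a \<longleftrightarrow> F - {z} \<in> fam X H a"
proof -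
  have m: "mono_in_edge_ideal H (\<lambda>v. if v \<in> F then a v - 1 else a v) = mono_in_edge_ideal H (\<lambda>v. if v \<in> F - {z} then a v - 1 else a v)"
    by (rule mono_cong) (use a in auto)
  have "(\<forall>v\<in>F. 1 \<le> a v) \<longleftrightarrow> (\<forall>v\<in>F - {z}. 1 \<le> a v)" using a by auto
  moreover have "F \<subseteq> X \<longleftrightarrow> F - {z} \<subseteq> X" using z by auto
  ultimately show ?thesis using m by (simp add: fam_def)
qed

lemma fam_sub: "\<forall>F\<in>fam X H a. F \<subseteq> X"
  by (auto simp: fam_def)

lemma tor_nonsq:
  fixes X :: "'v::linorder set"
  assumes X: "finite X" and a: "a z \<ge> 2" and z: "z \<in> X"
  shows "tor_dim TYPE('r::field) X H i a = 0"
proof -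
  have key: "F \<in> fam X H a \<longleftrightarrow> F - {z} \<in> fam X H a" for F by (rule fam_v0[where a=a and z=z and X=X, OF a z])
  have A: "z \<in> X \<and> insert z G \<in> fam X H a" if "G \<in> lev (fam X H a) i" "z \<notin> G" for G
  proof -
    have "insert z G - {z} = G" using that by auto
    then show ?thesis using key[of "insert z G"] that z by (simp add: lev_def)
  qed
  have Bc: "G - {z} \<in> fam X H a \<and> (\<forall>v\<in>X - G. insert v (G - {z}) \<in> fam X H a \<longrightarrow> insert v G \<in> fam X H a)"
    if "G \<in> lev (fam X H a) i" "z \<in> G" for G
  proof -
    have 1: "G - {z} \<in> fam X H a" using key[of G] that by (simp add: lev_def)
    have 2: "insert v G \<in> fam X H a" if v: "v \<in> X - G" "insert v (G - {z}) \<in> fam X H a" for v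
    proof -
      have "insert v G - {z} = insert v (G - {z})" using v \<open>z \<in> G\<close> by auto
      then show ?thesis using key[of "insert v G"] v by simp
    qed
    show ?thesis using 1 2 by blast
  qed
  have sub: "(kerd X (fam X H a) i :: ('v set \<Rightarrow> 'r) set) \<subseteq> imd X (fam X H a) (Suc i)"
    by (rule exact_hom[OF X fam_sub, where c = "\<lambda>_. z"]) (use A Bc in auto)
  show ?thesis unfolding tor_eq by (rule hom0[OF X fam_sub sub])
qed


lemma edge_iff:
  fixes B :: "nat \<Rightarrow> 'v set"
  assumes T: "T \<subseteq> (\<Union>s\<in>{1..t}. B s)" "finite T" and dj: "disj B {1..t}" and d: "d \<ge> 2"
  shows "(\<exists>E\<in>complete_multipartite_hg d t B. E \<subseteq> T) \<longleftrightarrow> (d \<le> card T \<and> \<not> (\<exists>s\<in>{1..t}. T \<subseteq> B s))"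
proof
  assume "\<exists>E\<in>complete_multipartite_hg d t B. E \<subseteq> T"
  then obtain E where E: "E \<subseteq> (\<Union>s\<in>{1..t}. B s)" "card E = d" "\<not> (\<exists>s\<in>{1..t}. E \<subseteq> B s)" "E \<subseteq> T"
    by (auto simp: complete_multipartite_hg_def)
  have "d \<le> card T" using E(2,4) T(2) card_mono by metis
  moreover have "\<not> (\<exists>s\<in>{1..t}. T \<subseteq> B s)" using E(3,4) by blast
  ultimately show "d \<le> card T \<and> \<not> (\<exists>s\<in>{1..t}. T \<subseteq> B s)" by simp
next
  assume A: "d \<le> card T \<and> \<not> (\<exists>s\<in>{1..t}. T \<subseteq> B s)"
  then have "T \<noteq> {}" using d by auto
  then obtain u where u: "u \<in> T" by blast
  then obtain s where s: "s \<in> {1..t}" "u \<in> B s" using T(1) by blast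
  obtain w where w: "w \<in> T" "w \<notin> B s" using A s by blast
  have uw: "u \<noteq> w" using s w by auto
  have "card (T - {u, w}) = card T - 2" using u w uw T(2) by (simp add: card_Diff_subset)
  moreover have "d \<le> card T" using A by simp
  ultimately have "d - 2 \<le> card (T - {u, w})" by linarith
  then obtain R where R: "R \<subseteq> T - {u, w}" "card R = d - 2" "finite R" by (rule obtain_subset_with_card_n)
  define E where "E = insert u (insert w R)"
  have nin: "u \<notin> insert w R" "w \<notin> R" using R uw by auto
  have "card E = Suc (Suc (d - 2))" unfolding E_def using nin R(2,3) by simp
  then have cE: "card E = d" using d by simp
  have ET: "E \<subseteq> T" using R u w unfolding E_def by auto
  have nb: "\<not> (\<exists>s'\<in>{1..t}. E \<subseteq> B s')"
  proof
    assume "\<exists>s'\<in>{1..t}. E \<subseteq> B s'"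
    then obtain s' where s': "s' \<in> {1..t}" "E \<subseteq> B s'" by blast
    then have "u \<in> B s'" "w \<in> B s'" unfolding E_def by auto
    then have "s' = s" using dj s s' unfolding disj_def by blast
    then show False using w \<open>w \<in> B s'\<close> by simp
  qed
  have "E \<in> complete_multipartite_hg d t B"
    using ET T(1) cE nb by (auto simp: complete_multipartite_hg_def)
  then show "\<exists>E\<in>complete_multipartite_hg d t B. E \<subseteq> T" using ET by blast
qed

lemma fam_sq:
  fixes B :: "nat \<Rightarrow> 'v set"
  assumes fin: "finite (\<Union>s\<in>{1..t}. B s)" and dj: "disj B {1..t}" and d: "d \<ge> 2"
    and SX: "S \<subseteq> (\<Union>s\<in>{1..t}. B s)"
  shows "fam (\<Union>s\<in>{1..t}. B s) (complete_multipartite_hg d t B) (\<lambda>v. if v \<in> S then 1 else 0) = Qf S d B {1..t}"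
proof -
  let ?X = "\<Union>s\<in>{1..t}. B s"
  let ?H = "complete_multipartite_hg d t B"
  have "F \<in> fam ?X ?H (\<lambda>v. if v \<in> S then 1 else 0) \<longleftrightarrow> F \<in> Qf S d B {1..t}" for F
  proof (cases "F \<subseteq> S")
    case False
    then have "\<not> (\<forall>v\<in>F. 1 \<le> (if v \<in> S then 1 else (0::nat)))" by auto
    then show ?thesis using False by (auto simp: fam_def Qf_def)
  next
    case True
    have m: "mono_in_edge_ideal ?H (\<lambda>v. if v \<in> F then (if v \<in> S then 1 else 0) - 1 else (if v \<in> S then 1 else 0))
        \<longleftrightarrow> (\<exists>E\<in>?H. E \<subseteq> S - F)"
      by (auto simp: mono_in_edge_ideal_def subset_iff)
    have fT: "finite (S - F)" using fin SX finite_subset by blast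
    have e: "(\<exists>E\<in>?H. E \<subseteq> S - F) \<longleftrightarrow> (d \<le> card (S - F) \<and> \<not> (\<exists>s\<in>{1..t}. S - F \<subseteq> B s))"
      by (rule edge_iff[OF _ fT dj d]) (use SX in auto)
    have "F \<subseteq> ?X" "\<forall>v\<in>F. 1 \<le> (if v \<in> S then 1 else (0::nat))" using True SX by auto
    then show ?thesis using True m e by (auto simp: fam_def Qf_def)
  qed
  then show ?thesis by blast
qed

lemma tor_sq:
  fixes B :: "nat \<Rightarrow> 'v::linorder set"
  assumes fin: "finite (\<Union>s\<in>{1..t}. B s)" and dj: "disj B {1..t}" and d: "d \<ge> 2"
    and SX: "S \<subseteq> (\<Union>s\<in>{1..t}. B s)" and i: "i \<ge> 1"
  shows "int (tor_dim TYPE('r::field) (\<Union>s\<in>{1..t}. B s) (complete_multipartite_hg d t B) i (\<lambda>v. if v \<in> S then 1 else 0))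
    = (if card S = i + d - 1 then int ((card S - 1) choose (d - 1)) - (\<Sum>s\<in>{1..t}. int ((card (S \<inter> B s) - 1) choose (d - 1))) else 0)"
  unfolding tor_eq fam_sq[OF fin dj d SX]
  by (rule hom_Q[OF fin SX _ dj d i]) simp

lemma count_prof:
  fixes B :: "nat \<Rightarrow> 'v set"
  assumes "\<forall>s\<in>{1..t}. finite (B s)" "disj B {1..t}"
  shows "card {S. S \<subseteq> (\<Union>s\<in>{1..t}. B s) \<and> (\<forall>s\<in>{1..t}. card (S \<inter> B s) = js s)} = (\<Prod>s=1..t. card (B s) choose js s)"
  using assms
proof (induction t)
  case 0
  have "{S. S \<subseteq> (\<Union>s\<in>{1..0::nat}. B s) \<and> (\<forall>s\<in>{1..0::nat}. card (S \<inter> B s) = js s)} = {{}}" by auto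
  then show ?case by simp
next
  case (Suc t)
  let ?U = "\<Union>s\<in>{1..t}. B s"
  let ?Bn = "B (Suc t)"
  let ?A = "{S. S \<subseteq> (\<Union>s\<in>{1..Suc t}. B s) \<and> (\<forall>s\<in>{1..Suc t}. card (S \<inter> B s) = js s)}"
  let ?At = "{S. S \<subseteq> ?U \<and> (\<forall>s\<in>{1..t}. card (S \<inter> B s) = js s)}"
  let ?Y = "{T. T \<subseteq> ?Bn \<and> card T = js (Suc t)}"
  have dj: "disj B {1..t}" using Suc.prems(2) by (auto simp: disj_def)
  have IH: "card ?At = (\<Prod>s=1..t. card (B s) choose js s)" using Suc.IH Suc.prems(1) dj by auto
  have Ueq: "(\<Union>s\<in>{1..Suc t}. B s) = ?U \<union> ?Bn" by (auto simp: atLeastAtMostSuc_conv)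
  have dBn: "B s \<inter> ?Bn = {}" if "s \<in> {1..t}" for s
    using Suc.prems(2) that unfolding disj_def by force
  have UB: "?U \<inter> ?Bn = {}" using dBn by blast
  have finBn: "finite ?Bn" using Suc.prems(1) by simp
  have bij: "bij_betw (\<lambda>S. (S \<inter> ?U, S \<inter> ?Bn)) ?A (?At \<times> ?Y)"
  proof (rule bij_betw_byWitness[where f' = "\<lambda>(P, T). P \<union> T"])
    show "\<forall>S\<in>?A. (\<lambda>(P, T). P \<union> T) (S \<inter> ?U, S \<inter> ?Bn) = S" using Ueq by auto
    show "\<forall>PT\<in>?At \<times> ?Y. (\<lambda>S. (S \<inter> ?U, S \<inter> ?Bn)) ((\<lambda>(P, T). P \<union> T) PT) = PT"
    proof
      fix PT assume "PT \<in> ?At \<times> ?Y"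
      then obtain P T where PT: "PT = (P, T)" "P \<subseteq> ?U" "T \<subseteq> ?Bn" by auto
      have "(P \<union> T) \<inter> ?U = P" using PT UB by blast
      moreover have "(P \<union> T) \<inter> ?Bn = T" using PT UB by blast
      ultimately show "(\<lambda>S. (S \<inter> ?U, S \<inter> ?Bn)) ((\<lambda>(P, T). P \<union> T) PT) = PT" using PT by simp
    qed
    show "(\<lambda>S. (S \<inter> ?U, S \<inter> ?Bn)) ` ?A \<subseteq> ?At \<times> ?Y"
    proof
      fix x assume "x \<in> (\<lambda>S. (S \<inter> ?U, S \<inter> ?Bn)) ` ?A"
      then obtain S where S: "S \<in> ?A" "x = (S \<inter> ?U, S \<inter> ?Bn)" by blast
      have 1: "card (S \<inter> ?U \<inter> B s) = js s" if "s \<in> {1..t}" for s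
      proof -
        have "S \<inter> ?U \<inter> B s = S \<inter> B s" using that by blast
        then show ?thesis using S that by auto
      qed
      have 2: "card (S \<inter> ?Bn) = js (Suc t)" using S by auto
      show "x \<in> ?At \<times> ?Y" using S 1 2 by auto
    qed
    show "(\<lambda>(P, T). P \<union> T) ` (?At \<times> ?Y) \<subseteq> ?A"
    proof
      fix x assume "x \<in> (\<lambda>(P, T). P \<union> T) ` (?At \<times> ?Y)"
      then obtain P T where PT: "P \<in> ?At" "T \<in> ?Y" "x = P \<union> T" by blast
      have sub: "x \<subseteq> (\<Union>s\<in>{1..Suc t}. B s)" using PT Ueq by auto
      have "card (x \<inter> B s) = js s" if s: "s \<in> {1..Suc t}" for s
      proof (cases "s = Suc t")
        case True
        have "x \<inter> ?Bn = T" using PT UB by blast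
        then show ?thesis using True PT by simp
      next
        case False
        then have s': "s \<in> {1..t}" using s by auto
        have "T \<inter> B s = {}" using PT dBn[OF s'] by blast
        then have "x \<inter> B s = P \<inter> B s" using PT by blast
        then show ?thesis using PT s' by simp
      qed
      then show "x \<in> ?A" using sub by blast
    qed
  qed
  have "card ?A = card (?At \<times> ?Y)" by (rule bij_betw_same_card[OF bij])
  also have "\<dots> = card ?At * card ?Y" by (rule card_cartesian_product)
  also have "card ?Y = card ?Bn choose js (Suc t)" by (rule n_subsets[OF finBn])
  finally show ?case using IH by simp
qed


lemma card_split:
  fixes B :: "nat \<Rightarrow> 'v set"
  assumes "\<forall>s\<in>{1..t}. finite (B s)" "disj B {1..t}" "S \<subseteq> (\<Union>s\<in>{1..t}. B s)"
  shows "card S = (\<Sum>s=1..t. card (S \<inter> B s))"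
proof -
  have "S = (\<Union>s\<in>{1..t}. S \<inter> B s)" using assms(3) by blast
  also have "card \<dots> = (\<Sum>s=1..t. card (S \<inter> B s))"
  proof (rule card_UN_disjoint)
    show "\<forall>s\<in>{1..t}. finite (S \<inter> B s)" using assms(1) by simp
    show "\<forall>s\<in>{1..t}. \<forall>s'\<in>{1..t}. s \<noteq> s' \<longrightarrow> S \<inter> B s \<inter> (S \<inter> B s') = {}"
      using assms(2) unfolding disj_def by blast
  qed simp
  finally show ?thesis .
qed

theorem theorem3p5:
  fixes t d :: nat and n :: "nat \<Rightarrow> nat" and B :: "nat \<Rightarrow> 'v::linorder set"
  assumes "t \<ge> 1" and "d \<ge> 2"
    and "\<And>s. s \<in> {1..t} \<Longrightarrow> n s \<ge> 1"
    and "\<And>s. s \<in> {1..t} \<Longrightarrow> finite (B s) \<and> card (B s) = n s"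
    and "\<And>s s'. s \<in> {1..t} \<Longrightarrow> s' \<in> {1..t} \<Longrightarrow> s \<noteq> s' \<Longrightarrow> B s \<inter> B s' = {}"
    and "i \<ge> 1"
  shows "int (betti TYPE('k::field) (\<Union>s\<in>{1..t}. B s) (complete_multipartite_hg d t B) i j) =
    (if j = i + (d - 1) then
       int ((\<Sum>s=1..t. n s) choose j) * int ((j - 1) choose (d - 1))
       - (\<Sum>js\<in>{js :: nat \<Rightarrow> nat. (\<forall>s. s \<notin> {1..t} \<longrightarrow> js s = 0) \<and> (\<Sum>s=1..t. js s) = j}.
            int (\<Prod>s=1..t. n s choose js s) * int (\<Sum>s=1..t. (js s - 1) choose (d - 1)))
     else 0)"
proof -
  let ?U = "\<Union>s\<in>{1..t}. B s"
  let ?H = "complete_multipartite_hg d t B"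
  have finB: "\<forall>s\<in>{1..t}. finite (B s)" using assms(4) by blast
  have dj: "disj B {1..t}" using assms(5) unfolding disj_def by blast
  have finU: "finite ?U" using finB by blast
  have cardU: "card ?U = (\<Sum>s=1..t. n s)"
  proof -
    have "card ?U = (\<Sum>s=1..t. card (B s))"
      by (rule card_UN_disjoint) (use finB assms(5) in auto)
    also have "\<dots> = (\<Sum>s=1..t. n s)" using assms(4) by simp
    finally show ?thesis .
  qed
  define Aj where "Aj = {a :: 'v \<Rightarrow> nat. (\<forall>v. v \<notin> ?U \<longrightarrow> a v = 0) \<and> (\<Sum>v\<in>?U. a v) = j}"
  define Sj where "Sj = {S. S \<subseteq> ?U \<and> card S = j}"
  define \<phi> where "\<phi> S = (\<lambda>v. if v \<in> S then 1 else (0::nat))" for S :: "'v set"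
  define tor where "tor a = tor_dim TYPE('k) ?U ?H i a" for a
  have finAj: "finite Aj"
  proof (rule finite_subset)
    show "Aj \<subseteq> {a. \<forall>x. (x \<in> ?U \<longrightarrow> a x \<in> {0..j}) \<and> (x \<notin> ?U \<longrightarrow> a x = 0)}"
    proof
      fix a assume a: "a \<in> Aj"
      have "a x \<le> j" if "x \<in> ?U" for x
        using a that member_le_sum[of x ?U a] finU unfolding Aj_def by auto
      then show "a \<in> {a. \<forall>x. (x \<in> ?U \<longrightarrow> a x \<in> {0..j}) \<and> (x \<notin> ?U \<longrightarrow> a x = 0)}"
        using a unfolding Aj_def by auto
    qed
    show "finite {a. \<forall>x. (x \<in> ?U \<longrightarrow> a x \<in> {0..j}) \<and> (x \<notin> ?U \<longrightarrow> (a x :: nat) = 0)}"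
      by (rule finite_set_of_finite_funs) (use finU in auto)
  qed
  have sumphi: "(\<Sum>v\<in>?U. \<phi> S v) = card S" if "S \<subseteq> ?U" for S
  proof -
    have "(\<Sum>v\<in>?U. \<phi> S v) = (\<Sum>v\<in>?U \<inter> S. 1)"
      unfolding \<phi>_def using finU by (simp add: sum.If_cases)
    also have "?U \<inter> S = S" using that by blast
    finally show ?thesis by simp
  qed
  have phiA: "\<phi> ` Sj \<subseteq> Aj"
  proof
    fix a assume "a \<in> \<phi> ` Sj"
    then obtain S where S: "S \<in> Sj" "a = \<phi> S" by blast
    then show "a \<in> Aj" using sumphi[of S] unfolding Aj_def Sj_def \<phi>_def by auto
  qed
  have injphi: "inj_on \<phi> Sj"
  proof (rule inj_onI)
    fix S1 S2 assume "S1 \<in> Sj" "S2 \<in> Sj" "\<phi> S1 = \<phi> S2"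
    then have "\<forall>v. (v \<in> S1) = (v \<in> S2)" unfolding \<phi>_def by (metis one_neq_zero)
    then show "S1 = S2" by blast
  qed
  have nonsq0: "tor a = 0" if a: "a \<in> Aj - \<phi> ` Sj" for a
  proof -
    have "\<exists>v. a v \<ge> 2"
    proof (rule ccontr)
      assume na: "\<not> (\<exists>v. a v \<ge> 2)"
      have le1: "\<forall>v. a v \<le> 1"
      proof
        fix v have "\<not> 2 \<le> a v" using na by blast
        then show "a v \<le> 1" by linarith
      qed
      define S where "S = {v. a v = 1}"
      have aS: "a = \<phi> S"
      proof
        fix v show "a v = \<phi> S v" using le1[rule_format, of v] unfolding S_def \<phi>_def by auto
      qed
      have SU: "S \<subseteq> ?U" using a unfolding S_def Aj_def by auto
      have "card S = j" using sumphi[OF SU] a aS unfolding Aj_def by simp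
      then have "S \<in> Sj" using SU Sj_def by simp
      then show False using a aS by blast
    qed
    then obtain v where v: "a v \<ge> 2" by blast
    then have "v \<in> ?U" using a unfolding Aj_def by (metis (mono_tags, lifting) DiffD1 mem_Collect_eq not_numeral_le_zero)
    then show ?thesis unfolding tor_def by (rule tor_nonsq[where a=a and z=v, OF finU v])
  qed
  have "betti TYPE('k) ?U ?H i j = (\<Sum>a\<in>Aj. tor a)" unfolding betti_def Aj_def tor_def ..
  also have "\<dots> = (\<Sum>a\<in>\<phi> ` Sj. tor a)"
    by (rule sum.mono_neutral_right[OF finAj phiA]) (use nonsq0 in blast)
  also have "\<dots> = (\<Sum>S\<in>Sj. tor (\<phi> S))" by (rule sum.reindex[OF injphi, unfolded comp_def])
  finally have b1: "int (betti TYPE('k) ?U ?H i j) = (\<Sum>S\<in>Sj. int (tor (\<phi> S)))" by simp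
  have tsq: "int (tor (\<phi> S)) = (if j = i + (d - 1) then int ((j - 1) choose (d - 1)) - (\<Sum>s\<in>{1..t}. int ((card (S \<inter> B s) - 1) choose (d - 1))) else 0)"
    if S: "S \<in> Sj" for S
  proof -
    have SU: "S \<subseteq> ?U" and cS: "card S = j" using S Sj_def by auto
    have "int (tor (\<phi> S)) = (if card S = i + d - 1 then int ((card S - 1) choose (d - 1)) - (\<Sum>s\<in>{1..t}. int ((card (S \<inter> B s) - 1) choose (d - 1))) else 0)"
      unfolding tor_def \<phi>_def by (rule tor_sq[OF finU dj assms(2) SU assms(6)])
    moreover have "(i + d - 1) = i + (d - 1)" using assms(2) by simp
    ultimately show ?thesis using cS by simp
  qed
  show ?thesis
  proof (cases "j = i + (d - 1)")
    case False
    then show ?thesis using b1 tsq by simp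
  next
    case True
    define prof where "prof S = (\<lambda>s. if s \<in> {1..t} then card (S \<inter> B s) else 0)" for S
    define J where "J = {js :: nat \<Rightarrow> nat. (\<forall>s. s \<notin> {1..t} \<longrightarrow> js s = 0) \<and> (\<Sum>s=1..t. js s) = j}"
    define G where "G S = (\<Sum>s\<in>{1..t}. int ((card (S \<inter> B s) - 1) choose (d - 1)))" for S
    define g where "g js = int (\<Sum>s=1..t. (js s - 1) choose (d - 1))" for js :: "nat \<Rightarrow> nat"
    have finSj: "finite Sj" using finU unfolding Sj_def by simp
    have finJ: "finite J"
    proof (rule finite_subset)
      show "J \<subseteq> {f. \<forall>x. (x \<in> {1..t} \<longrightarrow> f x \<in> {0..j}) \<and> (x \<notin> {1..t} \<longrightarrow> f x = 0)}"
      proof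
        fix f assume f: "f \<in> J"
        have "f x \<le> j" if "x \<in> {1..t}" for x
          using f that member_le_sum[of x "{1..t}" f] unfolding J_def by auto
        then show "f \<in> {f. \<forall>x. (x \<in> {1..t} \<longrightarrow> f x \<in> {0..j}) \<and> (x \<notin> {1..t} \<longrightarrow> f x = 0)}"
          using f unfolding J_def by auto
      qed
      show "finite {f. \<forall>x. (x \<in> {1..t} \<longrightarrow> f x \<in> {0..j}) \<and> (x \<notin> {1..t} \<longrightarrow> (f x :: nat) = 0)}"
        by (rule finite_set_of_finite_funs) auto
    qed
    have profJ: "prof ` Sj \<subseteq> J"
    proof
      fix x assume "x \<in> prof ` Sj"
      then obtain S where S: "S \<in> Sj" "x = prof S" by blast
      have "(\<Sum>s=1..t. prof S s) = (\<Sum>s=1..t. card (S \<inter> B s))" unfolding prof_def by simp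
      also have "\<dots> = card S" using card_split[OF finB dj, of S] S Sj_def by simp
      finally show "x \<in> J" using S Sj_def unfolding J_def prof_def by auto
    qed
    have Gg: "G S = g (prof S)" for S
      unfolding G_def g_def prof_def by (simp add: of_nat_sum)
    have fib: "card {S \<in> Sj. prof S = js} = (\<Prod>s=1..t. n s choose js s)" if js: "js \<in> J" for js
    proof -
      have "{S \<in> Sj. prof S = js} = {S. S \<subseteq> ?U \<and> (\<forall>s\<in>{1..t}. card (S \<inter> B s) = js s)}"
      proof
        show "{S \<in> Sj. prof S = js} \<subseteq> {S. S \<subseteq> ?U \<and> (\<forall>s\<in>{1..t}. card (S \<inter> B s) = js s)}"
        proof
          fix S assume "S \<in> {S \<in> Sj. prof S = js}"
          then have "S \<subseteq> ?U" "prof S = js" unfolding Sj_def by auto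
          then show "S \<in> {S. S \<subseteq> ?U \<and> (\<forall>s\<in>{1..t}. card (S \<inter> B s) = js s)}"
            unfolding prof_def by (auto dest: fun_cong)
        qed
        show "{S. S \<subseteq> ?U \<and> (\<forall>s\<in>{1..t}. card (S \<inter> B s) = js s)} \<subseteq> {S \<in> Sj. prof S = js}"
        proof
          fix S assume S: "S \<in> {S. S \<subseteq> ?U \<and> (\<forall>s\<in>{1..t}. card (S \<inter> B s) = js s)}"
          then have SU: "S \<subseteq> ?U" and cs: "\<forall>s\<in>{1..t}. card (S \<inter> B s) = js s" by auto
          have "card S = (\<Sum>s=1..t. card (S \<inter> B s))" by (rule card_split[OF finB dj SU])
          also have "\<dots> = (\<Sum>s=1..t. js s)" using cs by simp
          also have "\<dots> = j" using js J_def by simp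
          finally have "S \<in> Sj" using SU Sj_def by simp
          moreover have "prof S = js"
          proof
            fix s show "prof S s = js s" using cs js unfolding prof_def J_def by auto
          qed
          ultimately show "S \<in> {S \<in> Sj. prof S = js}" by simp
        qed
      qed
      also have "card \<dots> = (\<Prod>s=1..t. card (B s) choose js s)" by (rule count_prof[OF finB dj])
      also have "\<dots> = (\<Prod>s=1..t. n s choose js s)" using assms(4) by simp
      finally show ?thesis .
    qed
    have "(\<Sum>S\<in>Sj. G S) = (\<Sum>js\<in>J. \<Sum>S\<in>{S \<in> Sj. prof S = js}. G S)"
      by (rule sum.group[OF finSj finJ profJ, symmetric])
    also have "\<dots> = (\<Sum>js\<in>J. int (\<Prod>s=1..t. n s choose js s) * g js)"
    proof (rule sum.cong[OF refl])
      fix js assume js: "js \<in> J"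
      have "(\<Sum>S\<in>{S \<in> Sj. prof S = js}. G S) = (\<Sum>S\<in>{S \<in> Sj. prof S = js}. g js)"
        using Gg by simp
      also have "\<dots> = int (card {S \<in> Sj. prof S = js}) * g js" by simp
      finally show "(\<Sum>S\<in>{S \<in> Sj. prof S = js}. G S) = int (\<Prod>s=1..t. n s choose js s) * g js"
        using fib[OF js] by simp
    qed
    finally have gs: "(\<Sum>S\<in>Sj. G S) = (\<Sum>js\<in>J. int (\<Prod>s=1..t. n s choose js s) * g js)" .
    have cSj: "card Sj = (\<Sum>s=1..t. n s) choose j" unfolding Sj_def using n_subsets[OF finU, of j] cardU by simp
    have "int (betti TYPE('k) ?U ?H i j) = (\<Sum>S\<in>Sj. int ((j - 1) choose (d - 1)) - G S)"
      using b1 tsq True unfolding G_def by simp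
    also have "\<dots> = int (card Sj) * int ((j - 1) choose (d - 1)) - (\<Sum>S\<in>Sj. G S)"
      by (simp add: sum_subtractf)
    finally show ?thesis using True gs cSj unfolding J_def g_def by simp
  qed
qed

end
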